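(* Denote the obtained long-term time-average aggregate EV power flexibility value $\mathcal{F}=\lim_{T\to\infty}\frac{1}{T}\sum_{t=1}^{T}\mathbb{E}[F_t]$ of the offline problem $\textbf{P1}$ and of the online problem $\textbf{P1}'$ by $\mathcal{F}^{off}$ and $\mathcal{F}^{*}$, respectively. Then $$0 \le -\mathcal{F}^{*} + \mathcal{F}^{off} \leq \frac{1}{V_1}A_1,$$ where $A_1$ is the constant $A_1 = \frac{1}{2}\sum_{g\in\mathcal{G}}(\hat{x}_{g,max}^2+\hat{a}_{g,max}^2)+\frac{1}{2}\sum_{g\in\mathcal{G}}(\check{x}_{g,max}^2+\check{a}_{g,max}^2)$.
   Context: A charging station (CS) serves EVs $v\in\mathcal{V}$, each with arrival time $t_v^a$, departure time $t_v^d$, initial energy $e_v^a$, required departure energy $e_v^d$, maximum charging power $\bar p_v$, charging efficiency $\eta_c$, energy bounds $[\underline e_v,\bar e_v]$. The per-slot flexibility value is $F_t=(\pi_t^e+\pi_t^c\rho_t)(\hat p_{d,t}-\check p_{d,t})$, with electricity price $\pi_t^e$, carbon price $\pi_t^c$, grid carbon intensity $\rho_t$ (write $\pi_t=\pi_t^e+\pi_t^c\rho_t$), and $\hat p_{d,t},\check p_{d,t}$ the upper/lower aggregate charging-power trajectories. EVs are grouped into $G$ groups $g\in\mathcal{G}$ by charging delay; decision variables $\hat x_{g,t},\check x_{g,t}$ are group upper/lower charging powers with $\hat p_{d,t}=\sum_g\hat x_{g,t}$, $\check p_{d,t}=\sum_g\check x_{g,t}$. $\textbf{P1}$ (offline,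 with full knowledge of future uncertainties) is: minimize $\lim_{T\to\infty}\frac1T\sum_{t=1}^T\mathbb{E}[-F_t]$ subject to the time-average constraints $\lim_{T\to\infty}\frac1T\sum_{t}\mathbb{E}[\hat a_{g,t}-\hat x_{g,t}]\le 0$ and $\lim_{T\to\infty}\frac1T\sum_t\mathbb{E}[\check a_{g,t}-\check x_{g,t}]\le 0$ for all $g$, and $0\le \hat x_{g,t}\le x_{g,max}$, $0\le\check x_{g,t}\le x_{g,max}$, $\hat x_{g,t}\ge\check x_{g,t}$, where $\hat a_{g,t},\check a_{g,t}$ are upper/lower aggregate arriving charging demands of group $g$ and $x_{g,max}=\sum_{v\in\mathcal{V}_g}\bar p_v$. Charging queues are $\hat Q_{g,t+1}=\max[\hat Q_{g,t}-\hat x_{g,t},0]+\hat a_{g,t}$, $\check Q_{g,t+1}=\max[\check Q_{g,t}-\check x_{g,t},0]+\check a_{g,t}$, with $\hat Q_{g,1}=\check Q_{g,1}=0$. The online problem $\textbf{P1}'$ (Lyapunov drift-plus-penalty with weight $V_1>0$) solved at each slot $t$ given current queues is: minimize $\sum_{g}(-V_1\pi_t-\hat Q_{g,t})\hat x_{g,t}+(V_1\pi_t-\check Q_{g,t})\check x_{g,t}$ subject to $0\le \hat x_{g,t}\le x_{g,max}$, $0\le\check x_{g,t}\le x_{g,max}$, $\hat x_{g,t}\ge\check x_{g,t}$. In $A_1$, $\hat x_{g,max},\check x_{g,max}$ and $\hat a_{g,max},\check a_{g,max}$ are upper bounds on the group charging powers and arriving demands. *)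

theory Defs
  imports "HOL-Probability.Probability"
begin

text \<open>Time slots are t = 1, 2, ...; the value at index 0 is an unused placeholder.
  Charging queue: Q_1 = 0, Q_{t+1} = max(Q_t - x_t, 0) + a_t.\<close>
fun queue :: "(nat \<Rightarrow> real) \<Rightarrow> (nat \<Rightarrow> real) \<Rightarrow> nat \<Rightarrow> real" where
  "queue x a 0 = 0"
| "queue x a (Suc t) = (if t = 0 then 0 else max (queue x a t - x t) 0 + a t)"

definition price :: "('s \<Rightarrow> real) \<Rightarrow> ('s \<Rightarrow> real) \<Rightarrow> ('s \<Rightarrow> real) \<Rightarrow> 's \<Rightarrow> real" where
  "price pe pc rho s = pe s + pc s * rho s"

definition xmax :: "'v set \<Rightarrow> ('v \<Rightarrow> 'g) \<Rightarrow> ('v \<Rightarrow> real) \<Rightarrow> 'g \<Rightarrow> real" where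
  "xmax EV grp pbar g = (\<Sum>v\<in>{v\<in>EV. grp v = g}. pbar v)"

definition feasible_action :: "('g \<Rightarrow> real) \<Rightarrow> ('g \<Rightarrow> real) \<Rightarrow> ('g \<Rightarrow> real) \<Rightarrow> bool" where
  "feasible_action xm yh yc \<longleftrightarrow>
     (\<forall>g. 0 \<le> yh g \<and> yh g \<le> xm g \<and> 0 \<le> yc g \<and> yc g \<le> xm g \<and> yc g \<le> yh g)"

definition flex :: "real \<Rightarrow> ('g::finite \<Rightarrow> real) \<Rightarrow> ('g \<Rightarrow> real) \<Rightarrow> real" where
  "flex p yh yc = p * ((\<Sum>g\<in>UNIV. yh g) - (\<Sum>g\<in>UNIV. yc g))"

definition avg_flex ::
  "'w measure \<Rightarrow> ('s \<Rightarrow> real) \<Rightarrow> (nat \<Rightarrow> 'w \<Rightarrow> 's) \<Rightarrow>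
   ('g::finite \<Rightarrow> nat \<Rightarrow> 'w \<Rightarrow> real) \<Rightarrow> ('g \<Rightarrow> nat \<Rightarrow> 'w \<Rightarrow> real) \<Rightarrow> nat \<Rightarrow> real" where
  "avg_flex M pr W xh xc T =
     (\<Sum>t=1..T. integral\<^sup>L M (\<lambda>\<omega>. flex (pr (W t \<omega>)) (\<lambda>g. xh g t \<omega>) (\<lambda>g. xc g t \<omega>))) / real T"

definition flex_value ::
  "'w measure \<Rightarrow> ('s \<Rightarrow> real) \<Rightarrow> (nat \<Rightarrow> 'w \<Rightarrow> 's) \<Rightarrow>
   ('g::finite \<Rightarrow> nat \<Rightarrow> 'w \<Rightarrow> real) \<Rightarrow> ('g \<Rightarrow> nat \<Rightarrow> 'w \<Rightarrow> real) \<Rightarrow> ereal" where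
  "flex_value M pr W xh xc = liminf (\<lambda>T. ereal (avg_flex M pr W xh xc T))"

definition avg_gap ::
  "'w measure \<Rightarrow> ('s \<Rightarrow> real) \<Rightarrow> (nat \<Rightarrow> 'w \<Rightarrow> 's) \<Rightarrow> (nat \<Rightarrow> 'w \<Rightarrow> real) \<Rightarrow> nat \<Rightarrow> real" where
  "avg_gap M a W x T = (\<Sum>t=1..T. integral\<^sup>L M (\<lambda>\<omega>. a (W t \<omega>) - x t \<omega>)) / real T"

definition avg_constraints ::
  "'w measure \<Rightarrow> (nat \<Rightarrow> 'w \<Rightarrow> 's) \<Rightarrow> ('g \<Rightarrow> 's \<Rightarrow> real) \<Rightarrow> ('g \<Rightarrow> 's \<Rightarrow> real) \<Rightarrow>
   ('g \<Rightarrow> nat \<Rightarrow> 'w \<Rightarrow> real) \<Rightarrow> ('g \<Rightarrow> nat \<Rightarrow> 'w \<Rightarrow> real) \<Rightarrow> bool" where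
  "avg_constraints M W ah ac xh xc \<longleftrightarrow>
     (\<forall>g. limsup (\<lambda>T. ereal (avg_gap M (ah g) W (xh g) T)) \<le> 0 \<and>
          limsup (\<lambda>T. ereal (avg_gap M (ac g) W (xc g) T)) \<le> 0)"

text \<open>Feasible policies of the offline problem P1: decisions may depend on the whole
  (future) realisation, i.e. they are arbitrary measurable functions on the sample space.\<close>
definition offline_feasible ::
  "'w measure \<Rightarrow> (nat \<Rightarrow> 'w \<Rightarrow> 's) \<Rightarrow> ('g \<Rightarrow> real) \<Rightarrow> ('g \<Rightarrow> 's \<Rightarrow> real) \<Rightarrow> ('g \<Rightarrow> 's \<Rightarrow> real) \<Rightarrow>
   ('g \<Rightarrow> nat \<Rightarrow> 'w \<Rightarrow> real) \<Rightarrow> ('g \<Rightarrow> nat \<Rightarrow> 'w \<Rightarrow> real) \<Rightarrow> bool" where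
  "offline_feasible M W xm ah ac xh xc \<longleftrightarrow>
     (\<forall>g t. xh g t \<in> borel_measurable M \<and> xc g t \<in> borel_measurable M) \<and>
     (\<forall>t\<ge>1. \<forall>\<omega>\<in>space M. feasible_action xm (\<lambda>g. xh g t \<omega>) (\<lambda>g. xc g t \<omega>)) \<and>
     avg_constraints M W ah ac xh xc"

definition F_off ::
  "'w measure \<Rightarrow> ('s \<Rightarrow> real) \<Rightarrow> (nat \<Rightarrow> 'w \<Rightarrow> 's) \<Rightarrow> ('g::finite \<Rightarrow> real) \<Rightarrow>
   ('g \<Rightarrow> 's \<Rightarrow> real) \<Rightarrow> ('g \<Rightarrow> 's \<Rightarrow> real) \<Rightarrow> ereal" where
  "F_off M pr W xm ah ac =
     (SUP p \<in> {(xh, xc). offline_feasible M W xm ah ac xh xc}. flex_value M pr W (fst p) (snd p))"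

definition history :: "'w measure \<Rightarrow> 's measure \<Rightarrow> (nat \<Rightarrow> 'w \<Rightarrow> 's) \<Rightarrow> nat \<Rightarrow> 'w measure" where
  "history M S W t = sigma (space M) (\<Union>i\<in>{1..t}. {W i -` A \<inter> space M | A. A \<in> sets S})"

definition online_obj :: "real \<Rightarrow> real \<Rightarrow> ('g::finite \<Rightarrow> real) \<Rightarrow> ('g \<Rightarrow> real) \<Rightarrow>
    ('g \<Rightarrow> real) \<Rightarrow> ('g \<Rightarrow> real) \<Rightarrow> real" where
  "online_obj V p Qh Qc yh yc = (\<Sum>g\<in>UNIV. (- V * p - Qh g) * yh g + (V * p - Qc g) * yc g)"

text \<open>(xh, xc) is produced by the online algorithm: causal, and at each slot t it is an
  optimal solution of P1' given the current queues (generated by the algorithm itself).\<close>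
definition online_policy ::
  "'w measure \<Rightarrow> 's measure \<Rightarrow> (nat \<Rightarrow> 'w \<Rightarrow> 's) \<Rightarrow> real \<Rightarrow> ('s \<Rightarrow> real) \<Rightarrow> ('g::finite \<Rightarrow> real) \<Rightarrow>
   ('g \<Rightarrow> 's \<Rightarrow> real) \<Rightarrow> ('g \<Rightarrow> 's \<Rightarrow> real) \<Rightarrow>
   ('g \<Rightarrow> nat \<Rightarrow> 'w \<Rightarrow> real) \<Rightarrow> ('g \<Rightarrow> nat \<Rightarrow> 'w \<Rightarrow> real) \<Rightarrow> bool" where
  "online_policy M S W V pr xm ah ac xh xc \<longleftrightarrow>
     (\<forall>g t. xh g t \<in> borel_measurable (history M S W t) \<and>
            xc g t \<in> borel_measurable (history M S W t)) \<and>
     (\<forall>t\<ge>1. \<forall>\<omega>\<in>space M.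
        (let Qh = (\<lambda>g. queue (\<lambda>i. xh g i \<omega>) (\<lambda>i. ah g (W i \<omega>)) t);
             Qc = (\<lambda>g. queue (\<lambda>i. xc g i \<omega>) (\<lambda>i. ac g (W i \<omega>)) t)
         in feasible_action xm (\<lambda>g. xh g t \<omega>) (\<lambda>g. xc g t \<omega>) \<and>
            (\<forall>yh yc. feasible_action xm yh yc \<longrightarrow>
               online_obj V (pr (W t \<omega>)) Qh Qc (\<lambda>g. xh g t \<omega>) (\<lambda>g. xc g t \<omega>)
                 \<le> online_obj V (pr (W t \<omega>)) Qh Qc yh yc)))"

definition A1 :: "('g::finite \<Rightarrow> real) \<Rightarrow> ('g \<Rightarrow> real) \<Rightarrow> ('g \<Rightarrow> real) \<Rightarrow> ('g \<Rightarrow> real) \<Rightarrow> real" where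
  "A1 xhmax ahmax xcmax acmax =
     1/2 * (\<Sum>g\<in>UNIV. xhmax g ^ 2 + ahmax g ^ 2) + 1/2 * (\<Sum>g\<in>UNIV. xcmax g ^ 2 + acmax g ^ 2)"

end

theory Submission
  imports Defs "HOL-Probability.Conditional_Expectation"
begin

lemma hist_space: "space (history M S W t) = space M"
  unfolding history_def by (rule space_measure_of) auto

lemma hist_sets: "sets (history M S W t) = sigma_sets (space M) (\<Union>i\<in>{1..t}. {W i -` A \<inter> space M | A. A \<in> sets S})"
  unfolding history_def by (rule sets_measure_of) auto

lemma hist_sub:
  assumes "\<And>t. W t \<in> measurable M S"
  shows "subalgebra M (history M S W t)"
  unfolding subalgebra_def hist_space
proof
  show "sets (history M S W t) \<subseteq> sets M"
    unfolding hist_sets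
    by (rule sets.sigma_sets_subset) (auto intro: measurable_sets assms)
qed simp

lemma hist_mono:
  assumes "s \<le> t"
  shows "subalgebra (history M S W t) (history M S W s)"
proof -
  have "(\<Union>i\<in>{1..s}. {W i -` A \<inter> space M | A. A \<in> sets S}) \<subseteq> (\<Union>i\<in>{1..t}. {W i -` A \<inter> space M | A. A \<in> sets S})"
    using assms by (intro UN_mono) auto
  then show ?thesis unfolding subalgebra_def hist_space hist_sets
    by (simp add: sigma_sets_mono')
qed

lemma W_meas_hist:
  assumes "\<And>t. W t \<in> measurable M S" "1 \<le> i" "i \<le> t"
  shows "W i \<in> measurable (history M S W t) S"
proof (rule measurableI)
  fix x assume "x \<in> space (history M S W t)"
  then show "W i x \<in> space S" using measurable_space[OF assms(1)] by (auto simp: hist_space)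
next
  fix A assume "A \<in> sets S"
  then show "W i -` A \<inter> space (history M S W t) \<in> sets (history M S W t)"
  proof -
    have "W i -` A \<inter> space M \<in> {W i -` A \<inter> space M | A. A \<in> sets S}" using \<open>A \<in> sets S\<close> by blast
    then show ?thesis unfolding hist_space hist_sets using assms(2,3)
      by (intro sigma_sets.Basic UN_I[of i]) auto
  qed
qed

lemma (in prob_space) indep_hist:
  assumes Wm: "\<And>t. W t \<in> measurable M S"
    and ind: "indep_vars (\<lambda>_. S) W {1..}"
    and t: "1 \<le> t"
  shows "indep_var (history M S W (t - 1)) (\<lambda>x. x) S (W t)"
proof -
  define E where "E i = {W i -` A \<inter> space M | A. A \<in> sets S}" for i
  define I where "I = case_bool {1..t-1} {t}"
  have indE: "indep_sets E {1..}" using ind unfolding indep_vars_def2 E_def by auto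
  have "indep_sets E (\<Union>j\<in>UNIV. I j)"
    by (rule indep_sets_mono_index[OF _ indE]) (use t in \<open>auto simp: I_def split: bool.splits\<close>)
  then have R: "indep_sets (\<lambda>j. sigma_sets (space M) (\<Union>i\<in>I j. E i)) UNIV"
  proof (rule indep_sets_collect_sigma)
    fix i j show "Int_stable (E i)"
      unfolding E_def Int_stable_def
      apply auto
      apply (rule_tac x="A \<inter> Aa" in exI)
      apply auto
      done
  next
    show "disjoint_family_on I UNIV"
      unfolding disjoint_family_on_def I_def using t by (auto split: bool.splits)
  qed
  have sub: "subalgebra M (history M S W (t - 1))" by (rule hist_sub[OF Wm])
  have idm: "(\<lambda>x. x) \<in> measurable M (history M S W (t - 1))"
    using sub unfolding subalgebra_def
    by (intro measurableI) (auto simp: sets.Int_space_eq2)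
  show ?thesis
    unfolding indep_var_def indep_vars_def2
  proof
    show "\<forall>i\<in>UNIV. random_variable (case_bool (history M S W (t - 1)) S i) (case_bool (\<lambda>x. x) (W t) i)"
      using idm Wm by (auto split: bool.splits)
  next
    show "indep_sets (\<lambda>i. {case_bool (\<lambda>x. x) (W t) i -` A \<inter> space M |A. A \<in> sets (case_bool (history M S W (t - 1)) S i)}) UNIV"
    proof (rule indep_sets_mono_sets[OF R])
      fix b :: bool
      show "{case_bool (\<lambda>x. x) (W t) b -` A \<inter> space M |A. A \<in> sets (case_bool (history M S W (t - 1)) S b)}
            \<subseteq> sigma_sets (space M) (\<Union>i\<in>I b. E i)"
      proof (cases b)
        case True
        have "A \<inter> space M \<in> sigma_sets (space M) (\<Union>i\<in>{1..t-1}. E i)" if "A \<in> sets (history M S W (t - 1))" for A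
        proof -
          have "A \<subseteq> space M" using sets.sets_into_space[OF that] by (simp add: hist_space)
          then show ?thesis using that by (simp add: hist_sets E_def Int_absorb2)
        qed
        then show ?thesis using True by (auto simp: I_def)
      next
        case False
        have "E t \<subseteq> sigma_sets (space M) (E t)" by (rule sigma_sets_superset_generator)
        then show ?thesis using False by (auto simp: I_def E_def)
      qed
    qed
  qed
qed

lemma (in prob_space) indep_expect_ge:
  fixes g :: "'b \<Rightarrow> 'b \<Rightarrow> real"
  assumes ind: "indep_var N1 X1 N2 X2"
    and gm: "(\<lambda>p. g (fst p) (snd p)) \<in> borel_measurable (N1 \<Otimes>\<^sub>M N2)"
    and bnd: "\<And>a b. a \<in> space N1 \<Longrightarrow> b \<in> space N2 \<Longrightarrow> \<bar>g a b\<bar> \<le> B"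
    and lb: "\<And>a. a \<in> space N1 \<Longrightarrow> c \<le> (\<integral>\<omega>. g a (X2 \<omega>) \<partial>M)"
  shows "c \<le> (\<integral>\<omega>. g (X1 \<omega>) (X2 \<omega>) \<partial>M)"
proof -
  have rv1: "random_variable N1 X1" and rv2: "random_variable N2 X2"
    and eq: "distr M N1 X1 \<Otimes>\<^sub>M distr M N2 X2 = distr M (N1 \<Otimes>\<^sub>M N2) (\<lambda>x. (X1 x, X2 x))"
    using ind unfolding indep_var_distribution_eq by auto
  interpret PH: prob_space "distr M N1 X1" by (rule prob_space_distr[OF rv1])
  interpret PS: prob_space "distr M N2 X2" by (rule prob_space_distr[OF rv2])
  interpret P: pair_prob_space "distr M N1 X1" "distr M N2 X2" by unfold_locales
  have pm: "(\<lambda>x. (X1 x, X2 x)) \<in> measurable M (N1 \<Otimes>\<^sub>M N2)"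
    using rv1 rv2 by (intro measurable_Pair) auto
  have "(\<integral>\<omega>. g (X1 \<omega>) (X2 \<omega>) \<partial>M) = integral\<^sup>L (distr M (N1 \<Otimes>\<^sub>M N2) (\<lambda>x. (X1 x, X2 x))) (\<lambda>p. g (fst p) (snd p))"
    by (subst integral_distr[OF pm gm]) simp
  also have "\<dots> = integral\<^sup>L (distr M N1 X1 \<Otimes>\<^sub>M distr M N2 X2) (\<lambda>p. g (fst p) (snd p))"
    by (simp add: eq)
  finally have e1: "(\<integral>\<omega>. g (X1 \<omega>) (X2 \<omega>) \<partial>M) = integral\<^sup>L (distr M N1 X1 \<Otimes>\<^sub>M distr M N2 X2) (\<lambda>p. g (fst p) (snd p))" .
  have gm2: "(\<lambda>p. g (fst p) (snd p)) \<in> borel_measurable (distr M N1 X1 \<Otimes>\<^sub>M distr M N2 X2)"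
  proof -
    have ss: "sets (distr M N1 X1 \<Otimes>\<^sub>M distr M N2 X2) = sets (N1 \<Otimes>\<^sub>M N2)"
      by (rule sets_pair_measure_cong) simp_all
    show ?thesis by (subst measurable_cong_sets[OF ss refl]) (rule gm)
  qed
  have int: "integrable (distr M N1 X1 \<Otimes>\<^sub>M distr M N2 X2) (\<lambda>p. g (fst p) (snd p))"
  proof (rule P.P.integrable_const_bound[where B=B])
    show "AE p in distr M N1 X1 \<Otimes>\<^sub>M distr M N2 X2. norm (g (fst p) (snd p)) \<le> B"
      using bnd by (intro AE_I2) (auto simp: space_pair_measure)
  qed (rule gm2)
  have "integral\<^sup>L (distr M N1 X1 \<Otimes>\<^sub>M distr M N2 X2) (\<lambda>p. g (fst p) (snd p))
      = (\<integral>a. (\<integral>b. g a b \<partial>distr M N2 X2) \<partial>distr M N1 X1)"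
    using P.integral_fst'[OF int] by simp
  also have "c \<le> \<dots>"
  proof (rule PH.integral_ge_const)
    show "integrable (distr M N1 X1) (\<lambda>a. \<integral>b. g a b \<partial>distr M N2 X2)"
      using P.integrable_fst'[OF int] by simp
    show "AE a in distr M N1 X1. c \<le> (\<integral>b. g a b \<partial>distr M N2 X2)"
    proof (intro AE_I2)
      fix a assume a: "a \<in> space (distr M N1 X1)"
      have "(\<lambda>b. g a b) \<in> borel_measurable N2"
        using measurable_Pair2[OF gm, of a] a by simp
      then have "(\<integral>b. g a b \<partial>distr M N2 X2) = (\<integral>\<omega>. g a (X2 \<omega>) \<partial>M)"
        by (intro integral_distr rv2)
      then show "c \<le> (\<integral>b. g a b \<partial>distr M N2 X2)" using lb a by simp
    qed
  qed
  finally show ?thesis using e1 by simp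
qed

lemma (in prob_space) indep_hist2:
  assumes Wm: "\<And>t. W t \<in> measurable M S"
    and ind: "indep_vars (\<lambda>_. S) W {1..}"
    and t: "1 \<le> t" and s0: "s0 \<in> space S" and w0: "w0 \<in> space M"
  shows "indep_var (history M S W (t - 1) \<Otimes>\<^sub>M S) (\<lambda>\<omega>. (\<omega>, s0))
                   (history M S W (t - 1) \<Otimes>\<^sub>M S) (\<lambda>\<omega>. (w0, W t \<omega>))"
proof -
  define H where "H = history M S W (t - 1)"
  define E where "E i = {W i -` A \<inter> space M | A. A \<in> sets S}" for i
  define I where "I = case_bool {1..t-1} {t}"
  have indE: "indep_sets E {1..}" using ind unfolding indep_vars_def2 E_def by auto
  have "indep_sets E (\<Union>j\<in>UNIV. I j)"
    by (rule indep_sets_mono_index[OF _ indE]) (use t in \<open>auto simp: I_def split: bool.splits\<close>)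
  then have R: "indep_sets (\<lambda>j. sigma_sets (space M) (\<Union>i\<in>I j. E i)) UNIV"
  proof (rule indep_sets_collect_sigma)
    fix i j show "Int_stable (E i)"
      unfolding E_def Int_stable_def
      apply auto
      apply (rule_tac x="A \<inter> Aa" in exI)
      apply auto
      done
  next
    show "disjoint_family_on I UNIV"
      unfolding disjoint_family_on_def I_def using t by (auto split: bool.splits)
  qed
  have sub: "subalgebra M H" unfolding H_def by (rule hist_sub[OF Wm])
  have idm: "(\<lambda>x. x) \<in> measurable M H"
    using sub unfolding subalgebra_def
    by (intro measurableI) (auto simp: sets.Int_space_eq2)
  have spH: "space H = space M" unfolding H_def by (rule hist_space)
  have X1m: "(\<lambda>\<omega>. (\<omega>, s0)) \<in> measurable M (H \<Otimes>\<^sub>M S)"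
    using idm s0 by (intro measurable_Pair) auto
  have X2m: "(\<lambda>\<omega>. (w0, W t \<omega>)) \<in> measurable M (H \<Otimes>\<^sub>M S)"
    using Wm w0 spH by (intro measurable_Pair) auto
  show ?thesis
    unfolding indep_var_def indep_vars_def2 H_def[symmetric]
  proof
    show "\<forall>i\<in>UNIV. random_variable (case_bool (H \<Otimes>\<^sub>M S) (H \<Otimes>\<^sub>M S) i) (case_bool (\<lambda>\<omega>. (\<omega>, s0)) (\<lambda>\<omega>. (w0, W t \<omega>)) i)"
      proof
        fix i :: bool show "random_variable (case_bool (H \<Otimes>\<^sub>M S) (H \<Otimes>\<^sub>M S) i) (case_bool (\<lambda>\<omega>. (\<omega>, s0)) (\<lambda>\<omega>. (w0, W t \<omega>)) i)"
          by (cases i) (simp_all only: bool.case X1m X2m)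
      qed
  next
    show "indep_sets (\<lambda>i. {case_bool (\<lambda>\<omega>. (\<omega>, s0)) (\<lambda>\<omega>. (w0, W t \<omega>)) i -` A \<inter> space M |A. A \<in> sets (case_bool (H \<Otimes>\<^sub>M S) (H \<Otimes>\<^sub>M S) i)}) UNIV"
    proof (rule indep_sets_mono_sets[OF R])
      fix b :: bool
      show "{case_bool (\<lambda>\<omega>. (\<omega>, s0)) (\<lambda>\<omega>. (w0, W t \<omega>)) b -` A \<inter> space M |A. A \<in> sets (case_bool (H \<Otimes>\<^sub>M S) (H \<Otimes>\<^sub>M S) b)}
            \<subseteq> sigma_sets (space M) (\<Union>i\<in>I b. E i)"
      proof (cases b)
        case True
        have "(\<lambda>\<omega>. (\<omega>, s0)) -` A \<inter> space M \<in> sigma_sets (space M) (\<Union>i\<in>{1..t-1}. E i)"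
          if A: "A \<in> sets (H \<Otimes>\<^sub>M S)" for A
        proof -
          have "(\<lambda>\<omega>. (\<omega>, s0)) \<in> measurable H (H \<Otimes>\<^sub>M S)" by (rule measurable_Pair2'[OF s0])
          from measurable_sets[OF this A] have "(\<lambda>\<omega>. (\<omega>, s0)) -` A \<inter> space H \<in> sets H" .
          then show ?thesis by (simp only: spH) (simp add: H_def hist_sets E_def)
        qed
        then show ?thesis using True by (auto simp: I_def)
      next
        case False
        have "(\<lambda>\<omega>. (w0, W t \<omega>)) -` A \<inter> space M \<in> sigma_sets (space M) (E t)"
          if A: "A \<in> sets (H \<Otimes>\<^sub>M S)" for A
        proof -
          have "Pair w0 \<in> measurable S (H \<Otimes>\<^sub>M S)" by (rule measurable_Pair1') (simp add: spH w0)
          from measurable_sets[OF this A] have B: "Pair w0 -` A \<inter> space S \<in> sets S" .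
          have "(\<lambda>\<omega>. (w0, W t \<omega>)) -` A \<inter> space M = W t -` (Pair w0 -` A \<inter> space S) \<inter> space M"
            using measurable_space[OF Wm] by auto
          also have "\<dots> \<in> E t" using B unfolding E_def by blast
          finally show ?thesis by (rule sigma_sets.Basic)
        qed
        then show ?thesis using False by (auto simp: I_def)
      qed
    qed
  qed
qed

lemma (in prob_space) freeze:
  fixes f :: "'a \<Rightarrow> 's \<Rightarrow> real"
  assumes Wm: "\<And>t. W t \<in> measurable M S"
    and ind: "indep_vars (\<lambda>_. S) W {1..}"
    and t: "1 \<le> t"
    and fm: "(\<lambda>p. f (fst p) (snd p)) \<in> borel_measurable (history M S W (t - 1) \<Otimes>\<^sub>M S)"
    and bnd: "\<And>\<omega> s. \<omega> \<in> space M \<Longrightarrow> s \<in> space S \<Longrightarrow> \<bar>f \<omega> s\<bar> \<le> B"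
    and lb: "\<And>\<omega>. \<omega> \<in> space M \<Longrightarrow> c \<le> (\<integral>\<omega>'. f \<omega> (W t \<omega>') \<partial>M)"
  shows "c \<le> (\<integral>\<omega>. f \<omega> (W t \<omega>) \<partial>M)"
proof -
  define H where "H = history M S W (t - 1)"
  have spH: "space H = space M" unfolding H_def by (rule hist_space)
  obtain w0 where w0: "w0 \<in> space M" using not_empty by blast
  define s0 where "s0 = W t w0"
  have s0: "s0 \<in> space S" unfolding s0_def using measurable_space[OF Wm w0] .
  have I: "indep_var (H \<Otimes>\<^sub>M S) (\<lambda>\<omega>. (\<omega>, s0)) (H \<Otimes>\<^sub>M S) (\<lambda>\<omega>. (w0, W t \<omega>))"
    unfolding H_def by (rule indep_hist2[OF Wm ind t s0 w0])
  have "c \<le> (\<integral>\<omega>. (\<lambda>a b. f (fst a) (snd b)) (\<omega>, s0) (w0, W t \<omega>) \<partial>M)"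
  proof (rule indep_expect_ge[OF I])
    have "(\<lambda>p. (fst (fst p), snd (snd p))) \<in> measurable ((H \<Otimes>\<^sub>M S) \<Otimes>\<^sub>M (H \<Otimes>\<^sub>M S)) (H \<Otimes>\<^sub>M S)"
      by measurable
    from measurable_comp[OF this fm[folded H_def]]
    show "(\<lambda>p. f (fst (fst p)) (snd (snd p))) \<in> borel_measurable ((H \<Otimes>\<^sub>M S) \<Otimes>\<^sub>M (H \<Otimes>\<^sub>M S))"
      by (simp add: comp_def)
  next
    fix a b assume "a \<in> space (H \<Otimes>\<^sub>M S)" "b \<in> space (H \<Otimes>\<^sub>M S)"
    then show "\<bar>f (fst a) (snd b)\<bar> \<le> B" using bnd by (auto simp: space_pair_measure spH)
  next
    fix a assume "a \<in> space (H \<Otimes>\<^sub>M S)"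
    then show "c \<le> (\<integral>\<omega>. f (fst a) (snd (w0, W t \<omega>)) \<partial>M)" using lb by (auto simp: space_pair_measure spH)
  qed
  then show ?thesis by simp
qed

definition phi :: "('g::finite \<Rightarrow> real) \<Rightarrow> real \<Rightarrow> ('g \<Rightarrow> real) \<Rightarrow> ('g \<Rightarrow> real) \<Rightarrow> ('g \<Rightarrow> real) \<Rightarrow> ('g \<Rightarrow> real) \<Rightarrow> real" where
  "phi m p ahs acs lh lc = (\<Sum>g\<in>UNIV. max 0 (max ((p + lh g) * m g) ((lh g + lc g) * m g)) - lh g * ahs g - lc g * acs g)"

lemma vertex_bound:
  fixes p lh lc yh yc m :: real
  assumes "0 \<le> yc" "yc \<le> yh" "yh \<le> m"
  shows "p * (yh - yc) + lh * yh + lc * yc \<le> max 0 (max ((p + lh) * m) ((lh + lc) * m))"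
proof -
  define M where "M = max 0 (max (p + lh) (lh + lc))"
  have e: "p * (yh - yc) + lh * yh + lc * yc = (p + lh) * (yh - yc) + (lh + lc) * yc" by algebra
  have "(p + lh) * (yh - yc) \<le> M * (yh - yc)" using assms by (intro mult_right_mono) (auto simp: M_def)
  moreover have "(lh + lc) * yc \<le> M * yc" using assms by (intro mult_right_mono) (auto simp: M_def)
  moreover have "M * (yh - yc) + M * yc \<le> M * m" 
    using assms by (subst distrib_left[symmetric]) (intro mult_left_mono, auto simp: M_def)
  moreover have "M * m = max 0 (max ((p + lh) * m) ((lh + lc) * m))"
    using assms unfolding M_def by (auto simp: max_def mult_le_cancel_right zero_le_mult_iff)
  ultimately show ?thesis unfolding e by linarith
qed

lemma flex_sum: "flex p yh yc = (\<Sum>g\<in>UNIV. p * (yh g - yc g))"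
  unfolding flex_def by (simp add: sum_subtractf sum_distrib_left right_diff_distrib)

lemma phi_upper:
  assumes "feasible_action m yh yc"
  shows "flex p yh yc + (\<Sum>g\<in>UNIV. lh g * (yh g - ahs g) + lc g * (yc g - acs g)) \<le> phi m p ahs acs lh lc"
proof -
  have "flex p yh yc + (\<Sum>g\<in>UNIV. lh g * (yh g - ahs g) + lc g * (yc g - acs g))
      = (\<Sum>g\<in>UNIV. (p * (yh g - yc g) + lh g * yh g + lc g * yc g) - lh g * ahs g - lc g * acs g)"
    unfolding flex_sum sum.distrib[symmetric] by (intro sum.cong) (auto simp: algebra_simps)
  also have "\<dots> \<le> phi m p ahs acs lh lc"
    unfolding phi_def using assms unfolding feasible_action_def
    by (intro sum_mono diff_right_mono vertex_bound) auto
  finally show ?thesis .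
qed

lemma phi_attain:
  fixes m :: "'g::finite \<Rightarrow> real"
  assumes m: "\<And>g. 0 \<le> m g"
  shows "\<exists>yh yc. feasible_action m yh yc \<and>
     flex p yh yc + (\<Sum>g\<in>UNIV. lh g * yh g + lc g * yc g) = (\<Sum>g\<in>UNIV. max 0 (max ((p + lh g) * m g) ((lh g + lc g) * m g)))"
proof -
  define a where "a g = (p + lh g) * m g" for g
  define b where "b g = (lh g + lc g) * m g" for g
  define yh where "yh g = (if a g \<le> 0 \<and> b g \<le> 0 then 0 else m g)" for g
  define yc where "yc g = (if a g \<le> 0 \<and> b g \<le> 0 then 0 else if a g \<le> b g then m g else 0)" for g
  have "feasible_action m yh yc" unfolding feasible_action_def yh_def yc_def using m by auto
  moreover have "flex p yh yc + (\<Sum>g\<in>UNIV. lh g * yh g + lc g * yc g) = (\<Sum>g\<in>UNIV. max 0 (max (a g) (b g)))"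
    unfolding flex_sum sum.distrib[symmetric]
  proof (intro sum.cong refl)
    fix g
    show "p * (yh g - yc g) + (lh g * yh g + lc g * yc g) = max 0 (max (a g) (b g))"
      unfolding yh_def yc_def a_def b_def by (auto simp: max_def algebra_simps)
  qed
  ultimately show ?thesis unfolding a_def b_def by blast
qed

lemma online_obj_eq:
  "online_obj V p Qh Qc yh yc = - (V * flex p yh yc) - (\<Sum>g\<in>UNIV. Qh g * yh g + Qc g * yc g)"
  unfolding online_obj_def flex_sum sum_distrib_left sum_negf[symmetric] sum_subtractf[symmetric]
  by (intro sum.cong) (auto simp: algebra_simps)

lemma drift_arith:
  fixes u a Q x xm am :: real
  assumes "u^2 \<le> (Q - x)^2" "u * a \<le> Q * a" "x^2 \<le> xm^2" "a^2 \<le> am^2" "(Q - x)^2 = Q^2 - 2 * (Q * x) + x^2"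
  shows "u^2 + 2 * (u * a) + a^2 \<le> Q^2 + (xm^2 + am^2) + 2 * (Q * a - Q * x)"
  using assms by (smt (verit))

lemma queue_drift:
  fixes Q x a xm am :: real
  assumes "0 \<le> Q" "0 \<le> x" "x \<le> xm" "0 \<le> a" "a \<le> am"
  shows "(max (Q - x) 0 + a)^2 / 2 \<le> Q^2 / 2 + (xm^2 + am^2) / 2 + Q * (a - x)"
proof -
  define u where "u = max (Q - x) 0"
  have u: "u \<le> Q" "0 \<le> u" using assms by (auto simp: u_def)
  have h1: "u^2 \<le> (Q - x)^2" by (auto simp: u_def max_def power2_eq_square)
  have h2: "u * a \<le> Q * a" using u assms by (intro mult_right_mono) auto
  have h3: "x^2 \<le> xm^2" "a^2 \<le> am^2" using assms by (auto intro: power_mono)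
  have e1: "(u + a)^2 = u^2 + 2 * (u * a) + a^2" by (simp add: power2_eq_square algebra_simps)
  have e2: "(Q - x)^2 = Q^2 - 2 * (Q * x) + x^2" by (simp add: power2_eq_square algebra_simps)
  have e3: "Q * (a - x) = Q * a - Q * x" by (simp add: algebra_simps)
  have "(u + a)^2 / 2 \<le> Q^2 / 2 + (xm^2 + am^2) / 2 + Q * (a - x)"
  proof -
    have "(u + a)^2 / 2 \<le> (Q^2 + (xm^2 + am^2) + 2 * (Q * a - Q * x)) / 2"
      unfolding e1 using drift_arith[OF h1 h2 h3 e2] by (rule divide_right_mono) simp
    also have "\<dots> = Q^2 / 2 + (xm^2 + am^2) / 2 + Q * (a - x)" by (simp add: field_simps)
    finally show ?thesis .
  qed
  then show ?thesis by (simp add: u_def)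
qed

lemma slot_bound:
  fixes m Qh Qc xh xc ahs acs ahmax acmax xhmax xcmax :: "'g::finite \<Rightarrow> real" and p V :: real
  assumes V: "V > 0" and m: "\<And>g. 0 \<le> m g"
    and feas: "feasible_action m xh xc"
    and opt: "\<And>yh yc. feasible_action m yh yc \<Longrightarrow> online_obj V p Qh Qc xh xc \<le> online_obj V p Qh Qc yh yc"
    and Qpos: "\<And>g. 0 \<le> Qh g" "\<And>g. 0 \<le> Qc g"
    and a: "\<And>g. 0 \<le> ahs g" "\<And>g. ahs g \<le> ahmax g" "\<And>g. 0 \<le> acs g" "\<And>g. acs g \<le> acmax g"
    and mx: "\<And>g. m g \<le> xhmax g" "\<And>g. m g \<le> xcmax g"
  shows "(\<Sum>g\<in>UNIV. (max (Qh g - xh g) 0 + ahs g)^2 + (max (Qc g - xc g) 0 + acs g)^2) / 2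
         - (\<Sum>g\<in>UNIV. (Qh g)^2 + (Qc g)^2) / 2
       \<le> A1 xhmax ahmax xcmax acmax + V * flex p xh xc - V * phi m p ahs acs (\<lambda>g. Qh g / V) (\<lambda>g. Qc g / V)"
proof -
  obtain yh yc where y: "feasible_action m yh yc"
    and yv: "flex p yh yc + (\<Sum>g\<in>UNIV. Qh g / V * yh g + Qc g / V * yc g)
       = (\<Sum>g\<in>UNIV. max 0 (max ((p + Qh g / V) * m g) ((Qh g / V + Qc g / V) * m g)))"
    using phi_attain[where m=m and p=p and lh="\<lambda>g. Qh g / V" and lc="\<lambda>g. Qc g / V"] m by blast
  have fx: "\<And>g. 0 \<le> xh g \<and> xh g \<le> m g \<and> 0 \<le> xc g \<and> xc g \<le> m g" using feas unfolding feasible_action_def by auto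
  have "(\<Sum>g\<in>UNIV. Qh g / V * yh g + Qc g / V * yc g) = (\<Sum>g\<in>UNIV. Qh g * yh g + Qc g * yc g) / V"
    unfolding sum_divide_distrib by (intro sum.cong) (auto simp: add_divide_distrib)
  note yv' = yv[unfolded this]
  have xb1: "xh g \<le> xhmax g" for g using fx[of g] mx(1)[of g] by linarith
  have xb2: "xc g \<le> xcmax g" for g using fx[of g] mx(2)[of g] by linarith
  define S1 where "S1 = (\<Sum>g\<in>UNIV. Qh g * yh g + Qc g * yc g)"
  define X where "X = (\<Sum>g\<in>UNIV. max 0 (max ((p + Qh g / V) * m g) ((Qh g / V + Qc g / V) * m g)))"
  have "flex p yh yc + S1 / V = X" using yv' unfolding S1_def X_def .
  then have "V * flex p yh yc + V * (S1 / V) = V * X" by (metis distrib_left)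
  then have yv2: "V * flex p yh yc + S1 = V * X" using V by simp
  note yv2 = yv2[unfolded S1_def X_def]
  have o: "V * flex p yh yc + (\<Sum>g\<in>UNIV. Qh g * yh g + Qc g * yc g) \<le> V * flex p xh xc + (\<Sum>g\<in>UNIV. Qh g * xh g + Qc g * xc g)"
    using opt[OF y] unfolding online_obj_eq by linarith
  have phi_eq: "V * phi m p ahs acs (\<lambda>g. Qh g / V) (\<lambda>g. Qc g / V)
      = V * (\<Sum>g\<in>UNIV. max 0 (max ((p + Qh g / V) * m g) ((Qh g / V + Qc g / V) * m g))) - (\<Sum>g\<in>UNIV. Qh g * ahs g + Qc g * acs g)"
    unfolding phi_def sum_subtractf sum.distrib right_diff_distrib sum_distrib_left
    using V by (simp add: sum_subtractf sum.distrib)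
  have d: "(\<Sum>g\<in>UNIV. (max (Qh g - xh g) 0 + ahs g)^2 + (max (Qc g - xc g) 0 + acs g)^2) / 2
      \<le> (\<Sum>g\<in>UNIV. (Qh g)^2 + (Qc g)^2) / 2 + A1 xhmax ahmax xcmax acmax
         + (\<Sum>g\<in>UNIV. Qh g * (ahs g - xh g) + Qc g * (acs g - xc g))"
  proof -
    have "(\<Sum>g\<in>UNIV. (max (Qh g - xh g) 0 + ahs g)^2 + (max (Qc g - xc g) 0 + acs g)^2) / 2
       = (\<Sum>g\<in>UNIV. (max (Qh g - xh g) 0 + ahs g)^2 / 2 + (max (Qc g - xc g) 0 + acs g)^2 / 2)"
      by (simp add: sum_divide_distrib add_divide_distrib)
    also have "\<dots> \<le> (\<Sum>g\<in>UNIV. ((Qh g)^2 / 2 + ((xhmax g)^2 + (ahmax g)^2) / 2 + Qh g * (ahs g - xh g))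
                              + ((Qc g)^2 / 2 + ((xcmax g)^2 + (acmax g)^2) / 2 + Qc g * (acs g - xc g)))"
      using fx Qpos a xb1 xb2 by (intro sum_mono add_mono queue_drift) auto
    also have "\<dots> = (\<Sum>g\<in>UNIV. ((Qh g)^2 + (Qc g)^2) / 2 + (1/2 * ((xhmax g)^2 + (ahmax g)^2) + 1/2 * ((xcmax g)^2 + (acmax g)^2))
         + (Qh g * (ahs g - xh g) + Qc g * (acs g - xc g)))"
      by (intro sum.cong refl) (simp add: field_simps)
    also have "\<dots> = (\<Sum>g\<in>UNIV. (Qh g)^2 + (Qc g)^2) / 2 + A1 xhmax ahmax xcmax acmax
         + (\<Sum>g\<in>UNIV. Qh g * (ahs g - xh g) + Qc g * (acs g - xc g))"
      unfolding A1_def by (simp only: sum_divide_distrib sum_distrib_left sum.distrib[symmetric])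
    finally show ?thesis .
  qed
  have "(\<Sum>g\<in>UNIV. Qh g * (ahs g - xh g) + Qc g * (acs g - xc g))
      = (\<Sum>g\<in>UNIV. Qh g * ahs g + Qc g * acs g) - (\<Sum>g\<in>UNIV. Qh g * xh g + Qc g * xc g)"
    by (simp add: sum_subtractf[symmetric] algebra_simps)
  then show ?thesis using d o yv2 phi_eq by linarith
qed

lemma int_bnd:
  fixes f :: "'a \<Rightarrow> real"
  assumes "prob_space M" "f \<in> borel_measurable M" "\<And>\<omega>. \<omega> \<in> space M \<Longrightarrow> \<bar>f \<omega>\<bar> \<le> B"
  shows "integrable M f"
proof -
  interpret prob_space M by fact
  show ?thesis by (rule integrable_const_bound[where B=B]) (use assms in \<open>auto intro!: AE_I2\<close>)
qed

locale pf = prob_space M for M :: "'w measure" +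
  fixes S :: "'s measure" and W :: "nat \<Rightarrow> 'w \<Rightarrow> 's"
    and pe pc rho :: "'s \<Rightarrow> real"
    and ah ac :: "'g::finite \<Rightarrow> 's \<Rightarrow> real"
    and EV :: "'v set" and grp :: "'v \<Rightarrow> 'g" and pbar :: "'v \<Rightarrow> real"
    and V1 :: real
    and xhmax xcmax ahmax acmax :: "'g \<Rightarrow> real"
    and xh xc :: "'g \<Rightarrow> nat \<Rightarrow> 'w \<Rightarrow> real"
  assumes Wm: "\<And>t. W t \<in> measurable M S"
    and ind: "indep_vars (\<lambda>_. S) W {1..}"
    and idd: "\<And>t. t \<ge> 1 \<Longrightarrow> distr M S (W t) = distr M S (W 1)"
    and pem: "pe \<in> borel_measurable S" and pcm: "pc \<in> borel_measurable S" and rhom: "rho \<in> borel_measurable S"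
    and Bex: "\<exists>B. \<forall>s\<in>space S. \<bar>pe s\<bar> \<le> B \<and> \<bar>pc s\<bar> \<le> B \<and> \<bar>rho s\<bar> \<le> B"
    and ahm: "\<And>g. ah g \<in> borel_measurable S" and acm: "\<And>g. ac g \<in> borel_measurable S"
    and ahb: "\<And>g s. s \<in> space S \<Longrightarrow> 0 \<le> ah g s \<and> ah g s \<le> ahmax g"
    and acb: "\<And>g s. s \<in> space S \<Longrightarrow> 0 \<le> ac g s \<and> ac g s \<le> acmax g"
    and finEV: "finite EV" and pbar0: "\<And>v. v \<in> EV \<Longrightarrow> 0 \<le> pbar v"
    and xhmx: "\<And>g. xmax EV grp pbar g \<le> xhmax g" and xcmx: "\<And>g. xmax EV grp pbar g \<le> xcmax g"
    and V1: "V1 > 0"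
    and onl: "online_policy M S W V1 (price pe pc rho) (xmax EV grp pbar) ah ac xh xc"
begin

abbreviation "m \<equiv> xmax EV grp pbar"
abbreviation "pr \<equiv> price pe pc rho"

definition "Qh g t \<omega> = queue (\<lambda>i. xh g i \<omega>) (\<lambda>i. ah g (W i \<omega>)) t"
definition "Qc g t \<omega> = queue (\<lambda>i. xc g i \<omega>) (\<lambda>i. ac g (W i \<omega>)) t"

lemma m0: "0 \<le> m g"
  unfolding xmax_def using pbar0 by (intro sum_nonneg) auto

lemma prm[measurable]: "pr \<in> borel_measurable S"
  unfolding price_def[abs_def] using pem pcm rhom by measurable

definition "P0 = (SOME B. \<forall>s\<in>space S. \<bar>pe s\<bar> \<le> B \<and> \<bar>pc s\<bar> \<le> B \<and> \<bar>rho s\<bar> \<le> B)"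
definition "P = \<bar>P0\<bar> + P0 * P0"

lemma prb: "s \<in> space S \<Longrightarrow> \<bar>pr s\<bar> \<le> P"
proof -
  assume s: "s \<in> space S"
  have B: "\<forall>s\<in>space S. \<bar>pe s\<bar> \<le> P0 \<and> \<bar>pc s\<bar> \<le> P0 \<and> \<bar>rho s\<bar> \<le> P0"
    unfolding P0_def using Bex by (rule someI_ex)
  then have "\<bar>pe s\<bar> \<le> P0" "\<bar>pc s\<bar> \<le> P0" "\<bar>rho s\<bar> \<le> P0" using s by auto
  moreover have "\<bar>pc s * rho s\<bar> \<le> P0 * P0"
    unfolding abs_mult using calculation by (intro mult_mono) auto
  ultimately show ?thesis unfolding price_def P_def by (smt (verit))
qed

lemma P0: "0 \<le> P" 
proof -
  have "0 \<le> P0 * P0" by simp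
  then show ?thesis unfolding P_def by simp
qed

lemma onl_meas: "xh g t \<in> borel_measurable (history M S W t)" "xc g t \<in> borel_measurable (history M S W t)"
  using onl unfolding online_policy_def by auto

lemma onl_opt:
  assumes "1 \<le> t" "\<omega> \<in> space M"
  shows "feasible_action m (\<lambda>g. xh g t \<omega>) (\<lambda>g. xc g t \<omega>)"
    "\<And>yh yc. feasible_action m yh yc \<Longrightarrow>
        online_obj V1 (pr (W t \<omega>)) (\<lambda>g. Qh g t \<omega>) (\<lambda>g. Qc g t \<omega>) (\<lambda>g. xh g t \<omega>) (\<lambda>g. xc g t \<omega>)
          \<le> online_obj V1 (pr (W t \<omega>)) (\<lambda>g. Qh g t \<omega>) (\<lambda>g. Qc g t \<omega>) yh yc"
  using onl assms unfolding online_policy_def Let_def Qh_def[abs_def] Qc_def[abs_def] by auto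

lemma xb:
  assumes "1 \<le> t" "\<omega> \<in> space M"
  shows "0 \<le> xh g t \<omega>" "xh g t \<omega> \<le> m g" "0 \<le> xc g t \<omega>" "xc g t \<omega> \<le> m g" "xc g t \<omega> \<le> xh g t \<omega>"
  using onl_opt(1)[OF assms] unfolding feasible_action_def by auto

lemma Wsp: "\<omega> \<in> space M \<Longrightarrow> W t \<omega> \<in> space S"
  using measurable_space[OF Wm] .

lemma Qh_step: "1 \<le> t \<Longrightarrow> Qh g (Suc t) \<omega> = max (Qh g t \<omega> - xh g t \<omega>) 0 + ah g (W t \<omega>)"
  unfolding Qh_def by simp
lemma Qc_step: "1 \<le> t \<Longrightarrow> Qc g (Suc t) \<omega> = max (Qc g t \<omega> - xc g t \<omega>) 0 + ac g (W t \<omega>)"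
  unfolding Qc_def by simp
lemma Qh_1: "Qh g (Suc 0) \<omega> = 0" unfolding Qh_def by simp
lemma Qc_1: "Qc g (Suc 0) \<omega> = 0" unfolding Qc_def by simp

lemma Q_nn: "\<omega> \<in> space M \<Longrightarrow> 0 \<le> Qh g t \<omega> \<and> 0 \<le> Qc g t \<omega>"
proof (induction t)
  case 0 then show ?case by (simp add: Qh_def Qc_def)
next
  case (Suc t)
  show ?case
  proof (cases "t = 0")
    case True then show ?thesis by (simp add: Qh_1 Qc_1)
  next
    case False
    then have "1 \<le> t" by simp
    then show ?thesis using ahb[OF Wsp[OF Suc.prems]] acb[OF Wsp[OF Suc.prems]]
      by (simp add: Qh_step Qc_step)
  qed
qed

lemma Q_bd: "\<omega> \<in> space M \<Longrightarrow> Qh g (Suc t) \<omega> \<le> real t * ahmax g \<and> Qc g (Suc t) \<omega> \<le> real t * acmax g"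
proof (induction t)
  case 0 then show ?case by (simp add: Qh_1 Qc_1)
next
  case (Suc t)
  have "1 \<le> Suc t" by simp
  note x = xb[OF this Suc.prems]
  have x1: "0 \<le> xh g (Suc t) \<omega>" "0 \<le> xc g (Suc t) \<omega>" using x by auto
  have q: "0 \<le> Qh g (Suc t) \<omega>" "0 \<le> Qc g (Suc t) \<omega>" using Q_nn[OF Suc.prems] by auto
  have a: "ah g (W (Suc t) \<omega>) \<le> ahmax g" "ac g (W (Suc t) \<omega>) \<le> acmax g"
    using ahb[OF Wsp[OF Suc.prems]] acb[OF Wsp[OF Suc.prems]] by auto
  have "Qh g (Suc (Suc t)) \<omega> \<le> Qh g (Suc t) \<omega> + ahmax g"
    unfolding Qh_step[OF \<open>1 \<le> Suc t\<close>] using x1 q a by (auto simp: max_def)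
  moreover have "Qc g (Suc (Suc t)) \<omega> \<le> Qc g (Suc t) \<omega> + acmax g"
    unfolding Qc_step[OF \<open>1 \<le> Suc t\<close>] using x1 q a by (auto simp: max_def)
  ultimately show ?case using Suc.IH[OF Suc.prems] by (simp add: algebra_simps)
qed

lemma hist_meas_M: "f \<in> borel_measurable (history M S W t) \<Longrightarrow> f \<in> borel_measurable M"
proof -
  have "subalgebra M (history M S W t)" by (rule hist_sub) (rule Wm)
  then show "f \<in> borel_measurable (history M S W t) \<Longrightarrow> f \<in> borel_measurable M" using measurable_from_subalg by blast
qed

lemma hist_meas_mono: "s \<le> t \<Longrightarrow> f \<in> borel_measurable (history M S W s) \<Longrightarrow> f \<in> borel_measurable (history M S W t)"
  using measurable_from_subalg[OF hist_mono] by blast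

lemma Q_meas: "Qh g (Suc t) \<in> borel_measurable (history M S W t) \<and> Qc g (Suc t) \<in> borel_measurable (history M S W t)"
proof (induction t)
  case 0 then show ?case by (simp add: Qh_1 Qc_1)
next
  case (Suc t)
  have W: "W (Suc t) \<in> measurable (history M S W (Suc t)) S" by (rule W_meas_hist[OF Wm]) auto
  have a1: "(\<lambda>\<omega>. ah g (W (Suc t) \<omega>)) \<in> borel_measurable (history M S W (Suc t))"
    using measurable_comp[OF W ahm] by (simp add: comp_def)
  have a2: "(\<lambda>\<omega>. ac g (W (Suc t) \<omega>)) \<in> borel_measurable (history M S W (Suc t))"
    using measurable_comp[OF W acm] by (simp add: comp_def)
  have q1: "Qh g (Suc t) \<in> borel_measurable (history M S W (Suc t))"
    using hist_meas_mono[of t "Suc t"] Suc.IH by auto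
  have q2: "Qc g (Suc t) \<in> borel_measurable (history M S W (Suc t))"
    using hist_meas_mono[of t "Suc t"] Suc.IH by auto
  have e1: "Qh g (Suc (Suc t)) = (\<lambda>\<omega>. max (Qh g (Suc t) \<omega> - xh g (Suc t) \<omega>) 0 + ah g (W (Suc t) \<omega>))"
    by (rule ext) (rule Qh_step, simp)
  have e2: "Qc g (Suc (Suc t)) = (\<lambda>\<omega>. max (Qc g (Suc t) \<omega> - xc g (Suc t) \<omega>) 0 + ac g (W (Suc t) \<omega>))"
    by (rule ext) (rule Qc_step, simp)
  show ?case unfolding e1 e2
    by (intro conjI borel_measurable_add borel_measurable_max borel_measurable_diff measurable_const q1 q2 a1 a2 onl_meas) simp_all
qed

end

lemma flex_bound:
  assumes "feasible_action m yh yc" "\<bar>p\<bar> \<le> P"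
  shows "\<bar>flex p yh yc\<bar> \<le> P * (\<Sum>g\<in>UNIV. m g)"
proof -
  have f: "0 \<le> yh g - yc g \<and> yh g - yc g \<le> m g" for g
    using assms(1)[unfolded feasible_action_def, rule_format, of g] by linarith
  have "flex p yh yc = p * (\<Sum>g\<in>UNIV. yh g - yc g)" unfolding flex_def by (simp add: sum_subtractf)
  moreover have "0 \<le> (\<Sum>g\<in>UNIV. yh g - yc g)" using f by (intro sum_nonneg) auto
  moreover have "(\<Sum>g\<in>UNIV. yh g - yc g) \<le> (\<Sum>g\<in>UNIV. m g)" using f by (intro sum_mono) auto
  ultimately show ?thesis using assms(2) by (simp add: abs_mult mult_mono)
qed

lemma phi_bound:
  fixes m :: "'g::finite \<Rightarrow> real"
  assumes m: "\<And>g. 0 \<le> m g" and p: "\<bar>p\<bar> \<le> P"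
    and l: "\<And>g. 0 \<le> lh g \<and> lh g \<le> L \<and> 0 \<le> lc g \<and> lc g \<le> L"
    and a: "\<And>g. \<bar>ahs g\<bar> \<le> A \<and> \<bar>acs g\<bar> \<le> A"
  shows "\<bar>phi m p ahs acs lh lc\<bar> \<le> (\<Sum>g\<in>UNIV. (P + 3 * L) * m g + 2 * L * A)"
  unfolding phi_def
proof (rule order_trans[OF sum_abs], rule sum_mono)
  fix g
  have L0: "0 \<le> L" using l[of g] by auto
  have h1: "\<bar>(p + lh g) * m g\<bar> \<le> (P + L) * m g"
    using l[of g] m[of g] p by (auto simp: abs_mult intro!: mult_right_mono)
  have h2: "\<bar>(lh g + lc g) * m g\<bar> \<le> (2 * L) * m g"
    using l[of g] m[of g] by (auto simp: abs_mult intro!: mult_right_mono)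
  have h3: "\<bar>lh g * ahs g\<bar> \<le> L * A" "\<bar>lc g * acs g\<bar> \<le> L * A"
    using l[of g] a[of g] L0 by (auto simp: abs_mult intro!: mult_mono)
  have h4: "\<bar>max 0 (max ((p + lh g) * m g) ((lh g + lc g) * m g))\<bar> \<le> \<bar>(p + lh g) * m g\<bar> + \<bar>(lh g + lc g) * m g\<bar>"
    by (auto simp: max_def)
  show "\<bar>max 0 (max ((p + lh g) * m g) ((lh g + lc g) * m g)) - lh g * ahs g - lc g * acs g\<bar>
      \<le> (P + 3 * L) * m g + 2 * L * A"
    using h1 h2 h3 h4 by (auto simp: algebra_simps) 
qed

context pf begin

definition "Fon t \<omega> = flex (pr (W t \<omega>)) (\<lambda>g. xh g t \<omega>) (\<lambda>g. xc g t \<omega>)"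
definition "Lq t \<omega> = (\<Sum>g\<in>UNIV. (Qh g t \<omega>)^2 + (Qc g t \<omega>)^2) / 2"
definition "psi t \<omega> = phi m (pr (W t \<omega>)) (\<lambda>g. ah g (W t \<omega>)) (\<lambda>g. ac g (W t \<omega>)) (\<lambda>g. Qh g t \<omega> / V1) (\<lambda>g. Qc g t \<omega> / V1)"
definition "D lh lc = (\<integral>\<omega>. phi m (pr (W 1 \<omega>)) (\<lambda>g. ah g (W 1 \<omega>)) (\<lambda>g. ac g (W 1 \<omega>)) lh lc \<partial>M)"
definition "K = P * (\<Sum>g\<in>UNIV. m g)"
definition "Amax = (\<Sum>g\<in>UNIV. \<bar>ahmax g\<bar> + \<bar>acmax g\<bar>)"

lemma Wcomp[measurable]: "f \<in> borel_measurable S \<Longrightarrow> (\<lambda>\<omega>. f (W t \<omega>)) \<in> borel_measurable M"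
  using measurable_comp[OF Wm] by (simp add: comp_def)

lemma x_measM[measurable]: "xh g t \<in> borel_measurable M" "xc g t \<in> borel_measurable M"
  using hist_meas_M onl_meas by blast+

lemma Q_measM[measurable]: "Qh g t \<in> borel_measurable M" "Qc g t \<in> borel_measurable M"
proof -
  have "Qh g t \<in> borel_measurable M \<and> Qc g t \<in> borel_measurable M"
  proof (cases t)
    case 0
    have "Qh g t = (\<lambda>_. 0)" "Qc g t = (\<lambda>_. 0)" by (auto simp: Qh_def Qc_def 0)
    then show ?thesis by simp
  next
    case (Suc n) then show ?thesis using Q_meas[of g n] hist_meas_M by blast
  qed
  then show "Qh g t \<in> borel_measurable M" "Qc g t \<in> borel_measurable M" by auto
qed

lemma ah_measM[measurable]: "(\<lambda>\<omega>. ah g (W t \<omega>)) \<in> borel_measurable M" "(\<lambda>\<omega>. ac g (W t \<omega>)) \<in> borel_measurable M"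
  using ahm acm by measurable

lemma Fon_meas[measurable]: "Fon t \<in> borel_measurable M"
  unfolding Fon_def[abs_def] flex_def by measurable

lemma Fon_bnd: "1 \<le> t \<Longrightarrow> \<omega> \<in> space M \<Longrightarrow> \<bar>Fon t \<omega>\<bar> \<le> K"
  unfolding Fon_def K_def by (rule flex_bound[OF onl_opt(1) prb[OF Wsp]])

lemma Lq_meas[measurable]: "Lq t \<in> borel_measurable M"
  unfolding Lq_def[abs_def] by measurable

lemma psi_meas[measurable]: "psi t \<in> borel_measurable M"
  unfolding psi_def[abs_def] phi_def by measurable

lemma Amax: "\<bar>ahmax g\<bar> \<le> Amax" "\<bar>acmax g\<bar> \<le> Amax" "0 \<le> Amax"
proof -
  have "\<bar>ahmax g\<bar> + \<bar>acmax g\<bar> \<le> Amax" unfolding Amax_def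
    by (rule member_le_sum) auto
  moreover have "0 \<le> Amax" unfolding Amax_def by (intro sum_nonneg) auto
  ultimately show "\<bar>ahmax g\<bar> \<le> Amax" "\<bar>acmax g\<bar> \<le> Amax" "0 \<le> Amax" by auto
qed

lemma Q_bd2: "\<omega> \<in> space M \<Longrightarrow> Qh g t \<omega> \<le> real t * Amax \<and> Qc g t \<omega> \<le> real t * Amax"
proof (cases t)
  case 0 then show ?thesis by (simp add: Qh_def Qc_def)
next
  case (Suc n)
  assume w: "\<omega> \<in> space M"
  have nt: "real n \<le> real t" using Suc by simp
  have "real n * ahmax g \<le> real n * \<bar>ahmax g\<bar>" by (intro mult_left_mono) auto
  also have "\<dots> \<le> real t * Amax" using Amax(1)[of g] Amax(3) nt by (intro mult_mono) auto
  finally have h1: "real n * ahmax g \<le> real t * Amax" .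
  have "real n * acmax g \<le> real n * \<bar>acmax g\<bar>" by (intro mult_left_mono) auto
  also have "\<dots> \<le> real t * Amax" using Amax(2)[of g] Amax(3) nt by (intro mult_mono) auto
  finally have h2: "real n * acmax g \<le> real t * Amax" .
  note h1 h2
  then show ?thesis using Q_bd[OF w, of g n] Suc by auto
qed

lemma a_bd: "s \<in> space S \<Longrightarrow> \<bar>ah g s\<bar> \<le> Amax \<and> \<bar>ac g s\<bar> \<le> Amax"
  using ahb[of s g] acb[of s g] Amax(1,2)[of g] by auto

definition "Bpsi t = (\<Sum>g\<in>UNIV. (P + 3 * (real t * Amax / V1)) * m g + 2 * (real t * Amax / V1) * Amax)"

lemma psi_bnd_gen:
  assumes "s \<in> space S" "\<And>g. 0 \<le> lh g \<and> lh g \<le> real t * Amax / V1 \<and> 0 \<le> lc g \<and> lc g \<le> real t * Amax / V1"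
  shows "\<bar>phi m (pr s) (\<lambda>g. ah g s) (\<lambda>g. ac g s) lh lc\<bar> \<le> Bpsi t"
  unfolding Bpsi_def using assms a_bd
  by (intro phi_bound m0 prb) auto

lemma Qlam: "\<omega> \<in> space M \<Longrightarrow> 0 \<le> Qh g t \<omega> / V1 \<and> Qh g t \<omega> / V1 \<le> real t * Amax / V1 \<and> 0 \<le> Qc g t \<omega> / V1 \<and> Qc g t \<omega> / V1 \<le> real t * Amax / V1"
  using Q_nn[of \<omega> g t] Q_bd2[of \<omega> g t] V1 by (auto simp: divide_right_mono)

lemma psi_bnd: "\<omega> \<in> space M \<Longrightarrow> \<bar>psi t \<omega>\<bar> \<le> Bpsi t"
  unfolding psi_def using Qlam by (intro psi_bnd_gen Wsp) auto

lemma slot: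
  assumes t: "1 \<le> t" and w: "\<omega> \<in> space M"
  shows "Lq (Suc t) \<omega> - Lq t \<omega> \<le> A1 xhmax ahmax xcmax acmax + V1 * Fon t \<omega> - V1 * psi t \<omega>"
proof -
  have "(\<Sum>g\<in>UNIV. (max (Qh g t \<omega> - xh g t \<omega>) 0 + ah g (W t \<omega>))^2 + (max (Qc g t \<omega> - xc g t \<omega>) 0 + ac g (W t \<omega>))^2) / 2
         - (\<Sum>g\<in>UNIV. (Qh g t \<omega>)^2 + (Qc g t \<omega>)^2) / 2
       \<le> A1 xhmax ahmax xcmax acmax + V1 * flex (pr (W t \<omega>)) (\<lambda>g. xh g t \<omega>) (\<lambda>g. xc g t \<omega>)
          - V1 * phi m (pr (W t \<omega>)) (\<lambda>g. ah g (W t \<omega>)) (\<lambda>g. ac g (W t \<omega>)) (\<lambda>g. Qh g t \<omega> / V1) (\<lambda>g. Qc g t \<omega> / V1)"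
  proof (rule slot_bound[where m=m and xhmax=xhmax and xcmax=xcmax])
    show "0 < V1" by (rule V1)
    show "\<And>g. 0 \<le> m g" by (rule m0)
    show "feasible_action m (\<lambda>g. xh g t \<omega>) (\<lambda>g. xc g t \<omega>)" by (rule onl_opt(1)[OF t w])
    show "\<And>yh yc. feasible_action m yh yc \<Longrightarrow> online_obj V1 (pr (W t \<omega>)) (\<lambda>g. Qh g t \<omega>) (\<lambda>g. Qc g t \<omega>) (\<lambda>g. xh g t \<omega>) (\<lambda>g. xc g t \<omega>)
          \<le> online_obj V1 (pr (W t \<omega>)) (\<lambda>g. Qh g t \<omega>) (\<lambda>g. Qc g t \<omega>) yh yc" by (rule onl_opt(2)[OF t w])
  qed (use Q_nn[OF w] ahb[OF Wsp[OF w]] acb[OF Wsp[OF w]] xhmx xcmx in auto)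
  then show ?thesis unfolding Lq_def Fon_def psi_def Qh_step[OF t] Qc_step[OF t] .
qed

lemma Dt: "1 \<le> t \<Longrightarrow> (\<integral>\<omega>. phi m (pr (W t \<omega>)) (\<lambda>g. ah g (W t \<omega>)) (\<lambda>g. ac g (W t \<omega>)) lh lc \<partial>M) = D lh lc"
proof -
  assume t: "1 \<le> t"
  define f where "f s = phi m (pr s) (\<lambda>g. ah g s) (\<lambda>g. ac g s) lh lc" for s
  have fm: "f \<in> borel_measurable S" unfolding f_def[abs_def] phi_def using ahm acm by measurable
  have "(\<integral>\<omega>. f (W t \<omega>) \<partial>M) = integral\<^sup>L (distr M S (W t)) f" by (rule integral_distr[symmetric, OF Wm fm])
  also have "\<dots> = integral\<^sup>L (distr M S (W 1)) f" using idd[OF t] by simp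
  also have "\<dots> = (\<integral>\<omega>. f (W 1 \<omega>) \<partial>M)" by (rule integral_distr[OF Wm fm])
  finally show ?thesis unfolding f_def D_def .
qed

lemma psi_lb:
  assumes t: "1 \<le> t" and c: "\<And>lh lc. (\<And>g. 0 \<le> lh g \<and> 0 \<le> lc g) \<Longrightarrow> c \<le> D lh lc"
  shows "c \<le> (\<integral>\<omega>. psi t \<omega> \<partial>M)"
proof -
  define f where "f \<omega> s = phi m (pr s) (\<lambda>g. ah g s) (\<lambda>g. ac g s) (\<lambda>g. Qh g t \<omega> / V1) (\<lambda>g. Qc g t \<omega> / V1)" for \<omega> s
  have tt: "Suc (t - 1) = t" using t by simp
  have [measurable]: "Qh g t \<in> borel_measurable (history M S W (t - 1))" "Qc g t \<in> borel_measurable (history M S W (t - 1))" for g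
    using Q_meas[of g "t - 1"] unfolding tt by auto
  note [measurable] = ahm acm
  have "c \<le> (\<integral>\<omega>. f \<omega> (W t \<omega>) \<partial>M)"
  proof (rule freeze[OF Wm ind t])
    show "(\<lambda>p. f (fst p) (snd p)) \<in> borel_measurable (history M S W (t - 1) \<Otimes>\<^sub>M S)"
      unfolding f_def phi_def by measurable
    show "\<And>\<omega> s. \<omega> \<in> space M \<Longrightarrow> s \<in> space S \<Longrightarrow> \<bar>f \<omega> s\<bar> \<le> Bpsi t"
      unfolding f_def using Qlam by (intro psi_bnd_gen) auto
    show "\<And>\<omega>. \<omega> \<in> space M \<Longrightarrow> c \<le> (\<integral>\<omega>'. f \<omega> (W t \<omega>') \<partial>M)"
      unfolding f_def Dt[OF t] using Qlam by (intro c) auto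
  qed
  then show ?thesis unfolding f_def psi_def .
qed

end

context pf begin

lemma A1_nn: "0 \<le> A1 xhmax ahmax xcmax acmax"
  unfolding A1_def by (intro add_nonneg_nonneg mult_nonneg_nonneg sum_nonneg) auto

lemma K_nn: "0 \<le> K" unfolding K_def using P0 m0 by (intro mult_nonneg_nonneg sum_nonneg) auto

definition "BL t = (\<Sum>g\<in>(UNIV::'g set). (real t * Amax)^2 + (real t * Amax)^2) / 2"

lemma Lq_nn: "\<omega> \<in> space M \<Longrightarrow> 0 \<le> Lq t \<omega>"
  unfolding Lq_def by (intro divide_nonneg_pos sum_nonneg add_nonneg_nonneg) auto

lemma Lq_bnd: "\<omega> \<in> space M \<Longrightarrow> \<bar>Lq t \<omega>\<bar> \<le> BL t"
proof -
  assume w: "\<omega> \<in> space M"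
  have "Lq t \<omega> \<le> BL t" unfolding Lq_def BL_def
    using Q_nn[OF w] Q_bd2[OF w] by (intro divide_right_mono sum_mono add_mono power_mono) auto
  then show ?thesis using Lq_nn[OF w] by simp
qed

lemma int_Lq: "integrable M (Lq t)" by (rule int_bnd[OF prob_space_axioms Lq_meas Lq_bnd])
lemma int_Fon: "1 \<le> t \<Longrightarrow> integrable M (Fon t)" by (rule int_bnd[OF prob_space_axioms Fon_meas Fon_bnd])
lemma int_psi: "integrable M (psi t)" by (rule int_bnd[OF prob_space_axioms psi_meas psi_bnd])

lemma drift_sum:
  assumes c: "\<And>lh lc. (\<And>g. 0 \<le> lh g \<and> 0 \<le> lc g) \<Longrightarrow> c \<le> D lh lc"
  shows "(\<integral>\<omega>. Lq (Suc T) \<omega> \<partial>M) \<le> real T * A1 xhmax ahmax xcmax acmax + V1 * (\<Sum>t=1..T. \<integral>\<omega>. Fon t \<omega> \<partial>M) - V1 * real T * c"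
proof (induction T)
  case 0
  have "Lq (Suc 0) = (\<lambda>_. 0)" by (rule ext) (simp add: Lq_def Qh_1 Qc_1)
  then show ?case by simp
next
  case (Suc T)
  have t: "1 \<le> Suc T" by simp
  have "(\<integral>\<omega>. Lq (Suc (Suc T)) \<omega> - Lq (Suc T) \<omega> \<partial>M)
      \<le> (\<integral>\<omega>. A1 xhmax ahmax xcmax acmax + V1 * Fon (Suc T) \<omega> - V1 * psi (Suc T) \<omega> \<partial>M)"
    using int_Lq int_Fon[OF t] int_psi slot[OF t] by (intro integral_mono) auto
  also have "\<dots> = A1 xhmax ahmax xcmax acmax + V1 * (\<integral>\<omega>. Fon (Suc T) \<omega> \<partial>M) - V1 * (\<integral>\<omega>. psi (Suc T) \<omega> \<partial>M)"
    using int_Fon[OF t] int_psi by (simp add: prob_space)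
  also have "\<dots> \<le> A1 xhmax ahmax xcmax acmax + V1 * (\<integral>\<omega>. Fon (Suc T) \<omega> \<partial>M) - V1 * c"
    using psi_lb[OF t c] V1 by simp
  finally have "(\<integral>\<omega>. Lq (Suc (Suc T)) \<omega> - Lq (Suc T) \<omega> \<partial>M) \<le> A1 xhmax ahmax xcmax acmax + V1 * (\<integral>\<omega>. Fon (Suc T) \<omega> \<partial>M) - V1 * c" .
  moreover have "(\<integral>\<omega>. Lq (Suc (Suc T)) \<omega> - Lq (Suc T) \<omega> \<partial>M) = (\<integral>\<omega>. Lq (Suc (Suc T)) \<omega> \<partial>M) - (\<integral>\<omega>. Lq (Suc T) \<omega> \<partial>M)"
    using int_Lq by simp
  moreover have "(\<Sum>t=1..Suc T. \<integral>\<omega>. Fon t \<omega> \<partial>M) = (\<Sum>t=1..T. \<integral>\<omega>. Fon t \<omega> \<partial>M) + (\<integral>\<omega>. Fon (Suc T) \<omega> \<partial>M)"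
    by simp
  ultimately show ?case using Suc.IH by (simp add: algebra_simps)
qed

lemma avg_lb:
  assumes c: "\<And>lh lc. (\<And>g. 0 \<le> lh g \<and> 0 \<le> lc g) \<Longrightarrow> c \<le> D lh lc" and T: "1 \<le> T"
  shows "c - A1 xhmax ahmax xcmax acmax / V1 \<le> avg_flex M pr W xh xc T"
proof -
  have "0 \<le> (\<integral>\<omega>. Lq (Suc T) \<omega> \<partial>M)" using Lq_nn by (intro integral_nonneg_AE AE_I2) auto
  with drift_sum[OF c, of T] have "V1 * real T * c - real T * A1 xhmax ahmax xcmax acmax \<le> V1 * (\<Sum>t=1..T. \<integral>\<omega>. Fon t \<omega> \<partial>M)"
    by simp
  then have "real T * (c - A1 xhmax ahmax xcmax acmax / V1) \<le> (\<Sum>t=1..T. \<integral>\<omega>. Fon t \<omega> \<partial>M)"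
    using V1 by (simp add: field_simps)
  then have "c - A1 xhmax ahmax xcmax acmax / V1 \<le> (\<Sum>t=1..T. \<integral>\<omega>. Fon t \<omega> \<partial>M) / real T"
    using T by (simp add: field_simps)
  then show ?thesis unfolding avg_flex_def Fon_def[symmetric] .
qed

end

lemma limsup_le0:
  fixes x :: "nat \<Rightarrow> real"
  assumes "\<And>e. 0 < e \<Longrightarrow> \<exists>N. \<forall>T\<ge>N. x T \<le> e"
  shows "limsup (\<lambda>T. ereal (x T)) \<le> 0"
proof (rule ereal_le_epsilon2)
  fix e :: real assume e: "0 < e"
  obtain N where N: "\<forall>T\<ge>N. x T \<le> e" using assms[OF e] by blast
  have "limsup (\<lambda>T. ereal (x T)) \<le> ereal e"
    by (rule Limsup_bounded) (use N in \<open>auto simp: eventually_sequentially\<close>)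
  then show "limsup (\<lambda>T. ereal (x T)) \<le> 0 + ereal e" by simp
qed

lemma gap_limsup:
  fixes x :: "nat \<Rightarrow> real" and C :: real
  assumes C: "0 \<le> C" and b: "\<And>T \<delta>. 1 \<le> T \<Longrightarrow> 0 < \<delta> \<Longrightarrow> x T \<le> C / \<delta> + \<delta> / (2 * real T)"
  shows "limsup (\<lambda>T. ereal (x T)) \<le> 0"
proof (rule limsup_le0)
  fix e :: real assume e: "0 < e"
  define C1 where "C1 = C + 1"
  have C1: "0 < C1" "C \<le> C1" using C by (auto simp: C1_def)
  define \<delta> where "\<delta> = 2 * C1 / e"
  have d: "0 < \<delta>" using C1 e by (simp add: \<delta>_def)
  define N where "N = nat \<lceil>2 * C1 / e^2\<rceil> + 1"
  show "\<exists>N. \<forall>T\<ge>N. x T \<le> e"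
  proof (intro exI allI impI)
    fix T assume T: "N \<le> T"
    have T1: "1 \<le> T" using T by (simp add: N_def)
    have "2 * C1 / e^2 \<le> real T" using T unfolding N_def by linarith
    then have TT: "2 * C1 \<le> real T * e^2" using e by (simp add: field_simps)
    have "C / \<delta> \<le> C1 / \<delta>" using C1 d by (simp add: divide_right_mono)
    also have "C1 / \<delta> = e / 2" using C1 e by (simp add: \<delta>_def field_simps)
    finally have h1: "C / \<delta> \<le> e / 2" .
    have "\<delta> / (2 * real T) = C1 / (e * real T)" using e T1 by (simp add: \<delta>_def field_simps)
    also have "\<dots> \<le> e / 2" using TT e T1 by (simp add: field_simps power2_eq_square)
    finally have h2: "\<delta> / (2 * real T) \<le> e / 2" .
    show "x T \<le> e" using b[OF T1 d] h1 h2 by linarith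
  qed
qed

context pf begin

lemma QsumGap: "\<omega> \<in> space M \<Longrightarrow> (\<Sum>t=1..T. ah g (W t \<omega>) - xh g t \<omega>) \<le> Qh g (Suc T) \<omega> \<and> (\<Sum>t=1..T. ac g (W t \<omega>) - xc g t \<omega>) \<le> Qc g (Suc T) \<omega>"
proof (induction T)
  case 0 then show ?case by (simp add: Qh_1 Qc_1)
next
  case (Suc T)
  have t: "1 \<le> Suc T" by simp
  show ?case using Suc.IH[OF Suc.prems] unfolding Qh_step[OF t] Qc_step[OF t] by (simp add: max_def)
qed

lemma y_int:
  assumes "offline_feasible M W m ah ac yh yc" "1 \<le> t"
  shows "integrable M (yh g t)" "integrable M (yc g t)"
proof -
  have "yh g t \<in> borel_measurable M" "yc g t \<in> borel_measurable M" using assms(1) unfolding offline_feasible_def by auto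
  moreover have "\<bar>yh g t \<omega>\<bar> \<le> m g \<and> \<bar>yc g t \<omega>\<bar> \<le> m g" if "\<omega> \<in> space M" for \<omega>
    using assms that unfolding offline_feasible_def feasible_action_def by fastforce
  ultimately show "integrable M (yh g t)" "integrable M (yc g t)"
    by (auto intro!: int_bnd[OF prob_space_axioms])
qed

lemma aW_int: "integrable M (\<lambda>\<omega>. ah g (W t \<omega>))" "integrable M (\<lambda>\<omega>. ac g (W t \<omega>))"
  using a_bd Wsp by (auto intro!: int_bnd[OF prob_space_axioms, where B=Amax])

end

context pf begin

lemma phiW_int:
  assumes l: "\<And>g. 0 \<le> lh g \<and> 0 \<le> lc g"
  shows "integrable M (\<lambda>\<omega>. phi m (pr (W t \<omega>)) (\<lambda>g. ah g (W t \<omega>)) (\<lambda>g. ac g (W t \<omega>)) lh lc)"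
proof (rule int_bnd[OF prob_space_axioms])
  note [measurable] = ahm acm
  show "(\<lambda>\<omega>. phi m (pr (W t \<omega>)) (\<lambda>g. ah g (W t \<omega>)) (\<lambda>g. ac g (W t \<omega>)) lh lc) \<in> borel_measurable M"
    unfolding phi_def by measurable
  define Lam where "Lam = (\<Sum>g\<in>UNIV. lh g + lc g)"
  have lL: "lh g + lc g \<le> Lam" for g unfolding Lam_def using l by (intro member_le_sum) auto
  have ll: "0 \<le> lh g \<and> lh g \<le> Lam \<and> 0 \<le> lc g \<and> lc g \<le> Lam" for g using lL[of g] l[of g] by linarith
  fix \<omega> assume w: "\<omega> \<in> space M"
  show "\<bar>phi m (pr (W t \<omega>)) (\<lambda>g. ah g (W t \<omega>)) (\<lambda>g. ac g (W t \<omega>)) lh lc\<bar> \<le> (\<Sum>g\<in>UNIV. (P + 3 * Lam) * m g + 2 * Lam * Amax)"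
    using ll a_bd[OF Wsp[OF w]] by (intro phi_bound m0 prb Wsp[OF w]) auto
qed

lemma weak_dual:
  assumes y: "offline_feasible M W m ah ac yh yc" and l: "\<And>g. 0 \<le> lh g \<and> 0 \<le> lc g"
  shows "flex_value M pr W yh yc \<le> ereal (D lh lc)"
proof -
  define Fy where "Fy t \<omega> = flex (pr (W t \<omega>)) (\<lambda>g. yh g t \<omega>) (\<lambda>g. yc g t \<omega>)" for t \<omega>
  define gh where "gh g T = avg_gap M (ah g) W (yh g) T" for g T
  define gc where "gc g T = avg_gap M (ac g) W (yc g) T" for g T
  have ym[measurable]: "yh g t \<in> borel_measurable M" "yc g t \<in> borel_measurable M" for g t
    using y unfolding offline_feasible_def by auto
  have yf: "feasible_action m (\<lambda>g. yh g t \<omega>) (\<lambda>g. yc g t \<omega>)" if "1 \<le> t" "\<omega> \<in> space M" for t \<omega>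
    using y that unfolding offline_feasible_def by auto
  have lsh: "limsup (\<lambda>T. ereal (gh g T)) \<le> 0" "limsup (\<lambda>T. ereal (gc g T)) \<le> 0" for g
    using y unfolding offline_feasible_def avg_constraints_def gh_def gc_def by auto
  define Lam where "Lam = (\<Sum>g\<in>UNIV. lh g + lc g)"
  have Lam0: "0 \<le> Lam" unfolding Lam_def using l by (intro sum_nonneg) (auto intro: add_nonneg_nonneg)
  define I1 where "I1 g t = (\<integral>\<omega>. ah g (W t \<omega>) - yh g t \<omega> \<partial>M)" for g t
  define I2 where "I2 g t = (\<integral>\<omega>. ac g (W t \<omega>) - yc g t \<omega> \<partial>M)" for g t
  have step: "(\<integral>\<omega>. Fy t \<omega> \<partial>M) \<le> D lh lc + (\<Sum>g\<in>UNIV. lh g * I1 g t + lc g * I2 g t)" if t: "1 \<le> t" for t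
  proof -
    define phW where "phW \<omega> = phi m (pr (W t \<omega>)) (\<lambda>g. ah g (W t \<omega>)) (\<lambda>g. ac g (W t \<omega>)) lh lc" for \<omega>
    define R where "R g \<omega> = lh g * (ah g (W t \<omega>) - yh g t \<omega>) + lc g * (ac g (W t \<omega>) - yc g t \<omega>)" for g \<omega>
    have iR: "integrable M (R g)" for g
      unfolding R_def[abs_def] using aW_int y_int[OF y t] by auto
    have iphi: "integrable M phW" unfolding phW_def by (rule phiW_int[OF l])
    have iF: "integrable M (Fy t)"
    proof (rule int_bnd[OF prob_space_axioms])
      show "Fy t \<in> borel_measurable M" unfolding Fy_def[abs_def] flex_def by measurable
      show "\<And>\<omega>. \<omega> \<in> space M \<Longrightarrow> \<bar>Fy t \<omega>\<bar> \<le> K"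
        unfolding Fy_def K_def by (rule flex_bound[OF yf[OF t] prb[OF Wsp]])
    qed
    have pw: "Fy t \<omega> \<le> phW \<omega> + (\<Sum>g\<in>UNIV. R g \<omega>)" if w: "\<omega> \<in> space M" for \<omega>
    proof -
      have "Fy t \<omega> + (\<Sum>g\<in>UNIV. lh g * (yh g t \<omega> - ah g (W t \<omega>)) + lc g * (yc g t \<omega> - ac g (W t \<omega>))) \<le> phW \<omega>"
        unfolding Fy_def phW_def by (rule phi_upper[OF yf[OF t w]])
      moreover have "(\<Sum>g\<in>UNIV. lh g * (yh g t \<omega> - ah g (W t \<omega>)) + lc g * (yc g t \<omega> - ac g (W t \<omega>))) = - (\<Sum>g\<in>UNIV. R g \<omega>)"
        unfolding R_def sum_negf[symmetric] by (intro sum.cong) (auto simp: algebra_simps)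
      ultimately show ?thesis by linarith
    qed
    have "(\<integral>\<omega>. Fy t \<omega> \<partial>M) \<le> (\<integral>\<omega>. phW \<omega> + (\<Sum>g\<in>UNIV. R g \<omega>) \<partial>M)"
      using iF iphi iR pw by (intro integral_mono) auto
    also have "\<dots> = (\<integral>\<omega>. phW \<omega> \<partial>M) + (\<Sum>g\<in>UNIV. \<integral>\<omega>. R g \<omega> \<partial>M)"
      using iphi iR by (simp add: integral_sum)
    also have "\<dots> = D lh lc + (\<Sum>g\<in>UNIV. lh g * I1 g t + lc g * I2 g t)"
    proof -
      have "(\<integral>\<omega>. phW \<omega> \<partial>M) = D lh lc" unfolding phW_def by (rule Dt[OF t])
      moreover have "(\<integral>\<omega>. R g \<omega> \<partial>M) = lh g * I1 g t + lc g * I2 g t" for g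
        unfolding R_def I1_def I2_def using aW_int y_int[OF y t] by simp
      ultimately show ?thesis by simp
    qed
    finally show ?thesis .
  qed
  have avg: "avg_flex M pr W yh yc T \<le> D lh lc + (\<Sum>g\<in>UNIV. lh g * gh g T + lc g * gc g T)" if T: "1 \<le> T" for T
  proof -
    have "(\<Sum>t=1..T. \<integral>\<omega>. Fy t \<omega> \<partial>M) \<le> (\<Sum>t=1..T. D lh lc + (\<Sum>g\<in>UNIV. lh g * I1 g t + lc g * I2 g t))"
      using step by (intro sum_mono) auto
    also have "\<dots> = real T * D lh lc + (\<Sum>g\<in>UNIV. lh g * (\<Sum>t=1..T. I1 g t) + lc g * (\<Sum>t=1..T. I2 g t))"
      by (simp add: sum.distrib sum_distrib_left sum.swap[of _ "{Suc 0..T}" UNIV])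
    finally have "(\<Sum>t=1..T. \<integral>\<omega>. Fy t \<omega> \<partial>M) / real T \<le> (real T * D lh lc + (\<Sum>g\<in>UNIV. lh g * (\<Sum>t=1..T. I1 g t) + lc g * (\<Sum>t=1..T. I2 g t))) / real T"
      using T by (intro divide_right_mono) auto
    also have "\<dots> = D lh lc + (\<Sum>g\<in>UNIV. lh g * ((\<Sum>t=1..T. I1 g t) / real T) + lc g * ((\<Sum>t=1..T. I2 g t) / real T))"
    proof -
      have e: "(\<Sum>g\<in>UNIV. lh g * (\<Sum>t=1..T. I1 g t) + lc g * (\<Sum>t=1..T. I2 g t)) / real T
          = (\<Sum>g\<in>UNIV. lh g * ((\<Sum>t=1..T. I1 g t) / real T) + lc g * ((\<Sum>t=1..T. I2 g t) / real T))"
        unfolding sum_divide_distrib[of _ UNIV] by (intro sum.cong refl) (simp add: add_divide_distrib)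
      have "(real T * D lh lc + (\<Sum>g\<in>UNIV. lh g * (\<Sum>t=1..T. I1 g t) + lc g * (\<Sum>t=1..T. I2 g t))) / real T
          = D lh lc + (\<Sum>g\<in>UNIV. lh g * (\<Sum>t=1..T. I1 g t) + lc g * (\<Sum>t=1..T. I2 g t)) / real T"
        using T by (simp add: add_divide_distrib)
      then show ?thesis using e by simp
    qed
    finally show ?thesis unfolding avg_flex_def gh_def gc_def avg_gap_def I1_def I2_def Fy_def .
  qed
  show ?thesis
  proof (rule ereal_le_epsilon2)
    fix e :: real assume e: "0 < e"
    define eps where "eps = e / (Lam + 1)"
    have eps: "0 < eps" "eps * Lam \<le> e" using e Lam0 by (auto simp: eps_def field_simps)
    have ev: "eventually (\<lambda>T. \<forall>g. ereal (gh g T) < ereal eps \<and> ereal (gc g T) < ereal eps) sequentially"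
    proof (rule eventually_all_finite)
      fix g
      have "limsup (\<lambda>T. ereal (gh g T)) < ereal eps" "limsup (\<lambda>T. ereal (gc g T)) < ereal eps"
        using lsh[of g] eps by (auto intro: le_less_trans)
      then show "eventually (\<lambda>T. ereal (gh g T) < ereal eps \<and> ereal (gc g T) < ereal eps) sequentially"
        by (intro eventually_conj Limsup_lessD)
    qed
    have "eventually (\<lambda>T. ereal (avg_flex M pr W yh yc T) \<le> ereal (D lh lc + e)) sequentially"
      using ev eventually_ge_at_top[of 1]
    proof eventually_elim
      case (elim T)
      have "(\<Sum>g\<in>UNIV. lh g * gh g T + lc g * gc g T) \<le> (\<Sum>g\<in>UNIV. lh g * eps + lc g * eps)"
        using elim l by (intro sum_mono add_mono mult_left_mono) (auto simp: less_imp_le)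
      also have "\<dots> = eps * Lam" unfolding Lam_def by (simp add: sum_distrib_left algebra_simps)
      finally show ?case using avg[OF elim(2)] eps by simp
    qed
    then have "limsup (\<lambda>T. ereal (avg_flex M pr W yh yc T)) \<le> ereal (D lh lc + e)"
      by (rule Limsup_bounded)
    moreover have "flex_value M pr W yh yc \<le> limsup (\<lambda>T. ereal (avg_flex M pr W yh yc T))"
      unfolding flex_value_def by (rule Liminf_le_Limsup) simp
    ultimately show "flex_value M pr W yh yc \<le> ereal (D lh lc) + ereal e" by simp
  qed
qed

end

context pf begin

lemma x_int: "1 \<le> t \<Longrightarrow> integrable M (xh g t)" "1 \<le> t \<Longrightarrow> integrable M (xc g t)"
proof -
  assume t: "1 \<le> t"
  have "\<bar>xh g t \<omega>\<bar> \<le> m g" "\<bar>xc g t \<omega>\<bar> \<le> m g" if "\<omega> \<in> space M" for \<omega>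
    using xb[OF t that, of g] by auto
  then show "integrable M (xh g t)" "integrable M (xc g t)"
    by (auto intro!: int_bnd[OF prob_space_axioms])
qed

lemma Q_int: "integrable M (Qh g t)" "integrable M (Qc g t)"
proof -
  have "\<bar>Qh g t \<omega>\<bar> \<le> real t * Amax" "\<bar>Qc g t \<omega>\<bar> \<le> real t * Amax" if "\<omega> \<in> space M" for \<omega>
    using Q_nn[OF that, of g t] Q_bd2[OF that, of g t] by auto
  then show "integrable M (Qh g t)" "integrable M (Qc g t)"
    by (auto intro!: int_bnd[OF prob_space_axioms])
qed

lemma flex_lb:
  assumes y: "offline_feasible M W m ah ac yh yc"
  shows "ereal (- K) \<le> flex_value M pr W yh yc"
  unfolding flex_value_def
proof (rule Liminf_bounded)
  have yf: "feasible_action m (\<lambda>g. yh g t \<omega>) (\<lambda>g. yc g t \<omega>)" if "1 \<le> t" "\<omega> \<in> space M" for t \<omega>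
    using y that unfolding offline_feasible_def by auto
  have ym[measurable]: "yh g t \<in> borel_measurable M" "yc g t \<in> borel_measurable M" for g t
    using y unfolding offline_feasible_def by auto
  have one: "- K \<le> (\<integral>\<omega>. flex (pr (W t \<omega>)) (\<lambda>g. yh g t \<omega>) (\<lambda>g. yc g t \<omega>) \<partial>M)" if t: "1 \<le> t" for t
  proof (rule integral_ge_const)
    have b: "\<bar>flex (pr (W t \<omega>)) (\<lambda>g. yh g t \<omega>) (\<lambda>g. yc g t \<omega>)\<bar> \<le> K" if "\<omega> \<in> space M" for \<omega>
      unfolding K_def by (rule flex_bound[OF yf[OF t that] prb[OF Wsp[OF that]]])
    show "integrable M (\<lambda>\<omega>. flex (pr (W t \<omega>)) (\<lambda>g. yh g t \<omega>) (\<lambda>g. yc g t \<omega>))"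
      by (rule int_bnd[OF prob_space_axioms _ b]) (unfold flex_def, measurable)
    show "AE \<omega> in M. - K \<le> flex (pr (W t \<omega>)) (\<lambda>g. yh g t \<omega>) (\<lambda>g. yc g t \<omega>)"
      using b by (intro AE_I2) (metis abs_le_D2 minus_le_iff)
  qed
  show "eventually (\<lambda>T. ereal (- K) \<le> ereal (avg_flex M pr W yh yc T)) sequentially"
    using eventually_ge_at_top[of 1]
  proof eventually_elim
    case (elim T)
    have "(\<Sum>t=1..T. - K) \<le> (\<Sum>t=1..T. \<integral>\<omega>. flex (pr (W t \<omega>)) (\<lambda>g. yh g t \<omega>) (\<lambda>g. yc g t \<omega>) \<partial>M)"
      using one by (intro sum_mono) auto
    then have "- K * real T \<le> (\<Sum>t=1..T. \<integral>\<omega>. flex (pr (W t \<omega>)) (\<lambda>g. yh g t \<omega>) (\<lambda>g. yc g t \<omega>) \<partial>M)"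
      by (simp add: mult.commute)
    then show ?case unfolding avg_flex_def using elim by (simp add: field_simps)
  qed
qed

lemma onl_feasible:
  assumes ex: "\<exists>yh yc. offline_feasible M W m ah ac yh yc"
  shows "offline_feasible M W m ah ac xh xc"
proof -
  obtain y0h y0c where y0: "offline_feasible M W m ah ac y0h y0c" using ex by blast
  have cK: "- K \<le> D lh lc" if l: "\<And>g. 0 \<le> lh g \<and> 0 \<le> lc g" for lh lc
  proof -
    have "ereal (- K) \<le> ereal (D lh lc)" using flex_lb[OF y0] weak_dual[OF y0 l] by (rule order_trans)
    then show ?thesis by simp
  qed
  define C0 where "C0 = A1 xhmax ahmax xcmax acmax + 2 * V1 * K"
  have C0: "0 \<le> C0" unfolding C0_def using A1_nn K_nn V1 by simp
  have ELq: "(\<integral>\<omega>. Lq (Suc T) \<omega> \<partial>M) \<le> real T * C0" for T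
  proof -
    have "(\<Sum>t=1..T. \<integral>\<omega>. Fon t \<omega> \<partial>M) \<le> (\<Sum>t=1..T. K)"
    proof (intro sum_mono)
      fix t assume "t \<in> {1..T}" then have t: "1 \<le> t" by simp
      show "(\<integral>\<omega>. Fon t \<omega> \<partial>M) \<le> K"
        using Fon_bnd[OF t] int_Fon[OF t] by (intro integral_le_const AE_I2) (auto simp: abs_le_iff)
    qed
    then have "V1 * (\<Sum>t=1..T. \<integral>\<omega>. Fon t \<omega> \<partial>M) \<le> V1 * (real T * K)" using V1 by simp
    with drift_sum[OF cK, of T] show ?thesis unfolding C0_def by (simp add: algebra_simps)
  qed
  have gapb: "(\<Sum>t=1..T. \<integral>\<omega>. aa (W t \<omega>) - xx t \<omega> \<partial>M) / real T \<le> C0 / \<delta> + \<delta> / (2 * real T)"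
    if T: "1 \<le> T" and d: "0 < \<delta>"
      and ai: "\<And>t. integrable M (\<lambda>\<omega>. aa (W t \<omega>))" and xi: "\<And>t. 1 \<le> t \<Longrightarrow> integrable M (xx t)"
      and Qi: "integrable M QQ"
      and sg: "\<And>\<omega>. \<omega> \<in> space M \<Longrightarrow> (\<Sum>t=1..T. aa (W t \<omega>) - xx t \<omega>) \<le> QQ \<omega>"
      and QL: "\<And>\<omega>. \<omega> \<in> space M \<Longrightarrow> 0 \<le> QQ \<omega> \<and> (QQ \<omega>)^2 \<le> 2 * Lq (Suc T) \<omega>"
    for T \<delta> aa xx QQ
  proof -
    have "(\<Sum>t=1..T. \<integral>\<omega>. aa (W t \<omega>) - xx t \<omega> \<partial>M) = (\<integral>\<omega>. (\<Sum>t=1..T. aa (W t \<omega>) - xx t \<omega>) \<partial>M)"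
      using ai xi by (subst Bochner_Integration.integral_sum) auto
    also have "\<dots> \<le> (\<integral>\<omega>. QQ \<omega> \<partial>M)"
      using ai xi Qi sg by (intro integral_mono) auto
    also have "\<dots> \<le> (\<integral>\<omega>. Lq (Suc T) \<omega> / \<delta> + \<delta> / 2 \<partial>M)"
    proof (intro integral_mono)
      show "integrable M (\<lambda>\<omega>. Lq (Suc T) \<omega> / \<delta> + \<delta> / 2)" using int_Lq by simp
      fix \<omega> assume w: "\<omega> \<in> space M"
      have "2 * \<delta> * QQ \<omega> \<le> (QQ \<omega>)^2 + \<delta>^2"
        using sum_squares_ge_zero[of "QQ \<omega> - \<delta>" 0] by (simp add: power2_eq_square algebra_simps)
      also have "\<dots> \<le> 2 * Lq (Suc T) \<omega> + \<delta>^2" using QL[OF w] by simp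
      finally have "2 * \<delta> * QQ \<omega> \<le> 2 * Lq (Suc T) \<omega> + \<delta>^2" .
      then show "QQ \<omega> \<le> Lq (Suc T) \<omega> / \<delta> + \<delta> / 2" using d by (simp add: field_simps power2_eq_square)
    qed (rule Qi)
    also have "\<dots> = (\<integral>\<omega>. Lq (Suc T) \<omega> \<partial>M) / \<delta> + \<delta> / 2" using int_Lq by (simp add: prob_space)
    also have "\<dots> \<le> real T * C0 / \<delta> + \<delta> / 2" using ELq[of T] d by (simp add: divide_right_mono)
    finally have "(\<Sum>t=1..T. \<integral>\<omega>. aa (W t \<omega>) - xx t \<omega> \<partial>M) \<le> real T * C0 / \<delta> + \<delta> / 2" .
    then have "(\<Sum>t=1..T. \<integral>\<omega>. aa (W t \<omega>) - xx t \<omega> \<partial>M) / real T \<le> (real T * C0 / \<delta> + \<delta> / 2) / real T"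
      using T by (intro divide_right_mono) auto
    also have "\<dots> = C0 / \<delta> + \<delta> / (2 * real T)" using T by (simp add: field_simps)
    finally show ?thesis .
  qed
  have QL: "(Qh g (Suc T) \<omega>)^2 \<le> 2 * Lq (Suc T) \<omega> \<and> (Qc g (Suc T) \<omega>)^2 \<le> 2 * Lq (Suc T) \<omega>" for g T \<omega>
  proof -
    have s: "(Qh g (Suc T) \<omega>)^2 + (Qc g (Suc T) \<omega>)^2 \<le> (\<Sum>g\<in>UNIV. (Qh g (Suc T) \<omega>)^2 + (Qc g (Suc T) \<omega>)^2)"
      by (rule member_le_sum) auto
    have "0 \<le> (Qh g (Suc T) \<omega>)^2" "0 \<le> (Qc g (Suc T) \<omega>)^2" by auto
    then show ?thesis unfolding Lq_def using s by linarith
  qed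
  have lh: "limsup (\<lambda>T. ereal (avg_gap M (ah g) W (xh g) T)) \<le> 0" for g
    unfolding avg_gap_def
  proof (rule gap_limsup[OF C0])
    fix T :: nat and \<delta> :: real assume T: "1 \<le> T" and d: "0 < \<delta>"
    show "(\<Sum>t=1..T. \<integral>\<omega>. ah g (W t \<omega>) - xh g t \<omega> \<partial>M) / real T \<le> C0 / \<delta> + \<delta> / (2 * real T)"
      by (rule gapb[of T \<delta> "ah g" "xh g" "Qh g (Suc T)", OF T d]) (use aW_int x_int Q_int QsumGap Q_nn QL in auto)
  qed
  have lc: "limsup (\<lambda>T. ereal (avg_gap M (ac g) W (xc g) T)) \<le> 0" for g
    unfolding avg_gap_def
  proof (rule gap_limsup[OF C0])
    fix T :: nat and \<delta> :: real assume T: "1 \<le> T" and d: "0 < \<delta>"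
    show "(\<Sum>t=1..T. \<integral>\<omega>. ac g (W t \<omega>) - xc g t \<omega> \<partial>M) / real T \<le> C0 / \<delta> + \<delta> / (2 * real T)"
      by (rule gapb[of T \<delta> "ac g" "xc g" "Qc g (Suc T)", OF T d]) (use aW_int x_int Q_int QsumGap Q_nn QL in auto)
  qed
  show ?thesis unfolding offline_feasible_def avg_constraints_def
    using x_measM onl_opt(1) lh lc by auto
qed

end

theorem proposition2:
  fixes M :: "'w measure" and S :: "'s measure" and W :: "nat \<Rightarrow> 'w \<Rightarrow> 's"
    and pe pc rho :: "'s \<Rightarrow> real"
    and ah ac :: "'g::finite \<Rightarrow> 's \<Rightarrow> real"
    and EV :: "'v set" and grp :: "'v \<Rightarrow> 'g" and pbar :: "'v \<Rightarrow> real"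
    and V1 :: real
    and xhmax xcmax ahmax acmax :: "'g \<Rightarrow> real"
    and xh xc :: "'g \<Rightarrow> nat \<Rightarrow> 'w \<Rightarrow> real"
  assumes "prob_space M"
    and "\<And>t. W t \<in> measurable M S"
    and "prob_space.indep_vars M (\<lambda>_. S) W {1..}"
    and "\<And>t. t \<ge> 1 \<Longrightarrow> distr M S (W t) = distr M S (W 1)"
    and "pe \<in> borel_measurable S" and "pc \<in> borel_measurable S" and "rho \<in> borel_measurable S"
    and "\<exists>B. \<forall>s\<in>space S. \<bar>pe s\<bar> \<le> B \<and> \<bar>pc s\<bar> \<le> B \<and> \<bar>rho s\<bar> \<le> B"
    and "\<And>g. ah g \<in> borel_measurable S" and "\<And>g. ac g \<in> borel_measurable S"
    and "\<And>g s. s \<in> space S \<Longrightarrow> 0 \<le> ah g s \<and> ah g s \<le> ahmax g"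
    and "\<And>g s. s \<in> space S \<Longrightarrow> 0 \<le> ac g s \<and> ac g s \<le> acmax g"
    and "finite EV" and "\<And>v. v \<in> EV \<Longrightarrow> 0 \<le> pbar v"
    and "\<And>g. xmax EV grp pbar g \<le> xhmax g" and "\<And>g. xmax EV grp pbar g \<le> xcmax g"
    and "V1 > 0"
    and "\<exists>yh yc. offline_feasible M W (xmax EV grp pbar) ah ac yh yc"
    and "online_policy M S W V1 (price pe pc rho) (xmax EV grp pbar) ah ac xh xc"
  shows "flex_value M (price pe pc rho) W xh xc \<le> F_off M (price pe pc rho) W (xmax EV grp pbar) ah ac
       \<and> F_off M (price pe pc rho) W (xmax EV grp pbar) ah ac
           \<le> flex_value M (price pe pc rho) W xh xc + ereal (A1 xhmax ahmax xcmax acmax / V1)"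
proof -
  interpret pf M S W pe pc rho ah ac EV grp pbar V1 xhmax xcmax ahmax acmax xh xc
    by (intro pf.intro pf_axioms.intro) (fact assms)+
  have onF: "offline_feasible M W m ah ac xh xc" by (rule onl_feasible) (use assms in auto)
  have part1: "flex_value M pr W xh xc \<le> F_off M pr W m ah ac"
    unfolding F_off_def by (rule SUP_upper2[of "(xh, xc)"]) (use onF in auto)
  have part2: "F_off M pr W m ah ac \<le> flex_value M pr W xh xc + ereal (A1 xhmax ahmax xcmax acmax / V1)"
    unfolding F_off_def
  proof (rule SUP_least)
    fix p assume "p \<in> {(xh, xc). offline_feasible M W m ah ac xh xc}"
    then obtain yh yc where p: "p = (yh, yc)" and y: "offline_feasible M W m ah ac yh yc" by auto
    show "flex_value M pr W (fst p) (snd p) \<le> flex_value M pr W xh xc + ereal (A1 xhmax ahmax xcmax acmax / V1)"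
    proof (cases "flex_value M pr W yh yc = -\<infinity>")
      case True then show ?thesis using p by simp
    next
      case False
      have "flex_value M pr W yh yc \<le> ereal (D (\<lambda>_. 0) (\<lambda>_. 0))" by (rule weak_dual[OF y]) auto
      with False obtain c where c: "flex_value M pr W yh yc = ereal c"
        by (cases "flex_value M pr W yh yc") auto
      have cD: "c \<le> D lh lc" if "\<And>g. 0 \<le> lh g \<and> 0 \<le> lc g" for lh lc
        using weak_dual[OF y that] c by simp
      have "ereal (c - A1 xhmax ahmax xcmax acmax / V1) \<le> flex_value M pr W xh xc"
        unfolding flex_value_def
        by (rule Liminf_bounded) (use avg_lb[OF cD] in \<open>auto simp: eventually_sequentially\<close>)
      then have "ereal (c - A1 xhmax ahmax xcmax acmax / V1) + ereal (A1 xhmax ahmax xcmax acmax / V1)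
          \<le> flex_value M pr W xh xc + ereal (A1 xhmax ahmax xcmax acmax / V1)"
        by (rule add_right_mono)
      then show ?thesis using p c by simp
    qed
  qed
  show ?thesis using part1 part2 by simp
qed

end
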